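(* (a) (Block 3.) Let $E/F$ be a degree-4 datum, with notation $\rho,\zeta,v,u,L,\theta$ as below, and let $\xi_\alpha,\xi_\beta,\xi_\gamma\in\mathbb Z/2\mathbb Z$ with $\xi_\alpha+\xi_\beta+\xi_\gamma=0$. Let $Q$ be the quiver with vertices $1,2,3$ and arrows $\alpha:2\to1$, $\beta:3\to2$, $\gamma:1\to3$, with fields $F_1=E$, $F_2=F_3=L$, and bimodules $A_\alpha=E^{\theta^{\xi_\alpha}}\otimes_LL$, $A_\beta=L^{\theta^{\xi_\beta}}\otimes_LL$, $A_\gamma=L^{\theta^{\xi_\gamma}}\otimes_LE$. Let $\Lambda'=T_R(A)/\langle\alpha\beta,\beta\gamma,\gamma\alpha\rangle$. Let $\widehat Q$ be $Q$ with an extra loop $s_1$ at vertex $1$, let $K=L$, $\sigma_a=\theta^{\xi_a}$ for $a\in\{\alpha,\beta,\gamma\}$, $\sigma_{s_1}=1_L$, and $\Lambda=L_{\boldsymbol\sigma}\widehat Q/\langle \alpha\beta,\beta\gamma,\gamma\alpha,\,s_1^2-ue_1\rangle$. Then $\Lambda'\cong\Lambda$ as $F$-algebras. (b) (Block 9.) Let $L/F$ be a degree-2 datum. Let $Q$ be as in (a) with fields $F_1=L$, $F_2=F_3=F$ and bimodules $A_\alpha=L\otimes_FF$, $A_\beta=F\otimes_FF$, $A_\gamma=F\otimes_FL$, and let $\Lambda'=T_R(A)/\langle\alpha\beta,\beta\gamma,\gamma\alpha\rangle$. Let $\widehat Q$ be $Q$ with an extra loop $s_1$ at $1$, $K=F$,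 all $\sigma$'s equal to $1_F$, and $\Lambda=F\widehat Q/\langle\alpha\beta,\beta\gamma,\gamma\alpha,\,s_1^2-u^2e_1\rangle$. Then $\Lambda'\cong\Lambda$ as $F$-algebras.
   Context: Degree-2 datum: a degree-2 field extension $L/F$ with $\operatorname{char}F\neq2$; $\theta$ denotes the nontrivial element of $\operatorname{Gal}(L/F)$ and $u\in L\setminus\{0\}$ satisfies $\theta(u)=-u$ (so $u^2\in F$). Degree-4 datum: a cyclic Galois extension $E/F$ of degree 4 with $F$ containing a primitive 4th root of unity $\zeta$; $\rho$ is a generator of $\operatorname{Gal}(E/F)$, $v\in E\setminus\{0\}$ satisfies $\rho(v)=\zeta v$, $u:=v^2$, $L:=F(u)$ is the unique intermediate field with $[L:F]=2$, and $\theta:=\rho|_L$ generates $\operatorname{Gal}(L/F)$ (so $\theta(u)=-u$). Twisted bimodules: for fields $K'''\subseteq K',K''$ and an automorphism $g$ of $K'''$, $K'^{g}\otimes_{K'''}K''$ is the $K'$-$K''$-bimodule where $K'^g$ is $K'$ with left multiplication and right action $m\star z=m\,g(z)$ ($z\in K'''$). Tensor ring of a species: for a quiver $Q$ with fields $F_i$ at vertices and for each arrow $a:t(a)\to h(a)$ a bimodule $A_a=F_{h(a)}^{g_a}\otimes_{F_{h(a)}\cap F_{t(a)}}F_{t(a)}$, put $R=\prod_iF_i$ (with primitive idempotents $e_i$), $A=\bigoplus_aA_a$ (an $R$-$R$-bimodule) and $T_R(A)=\bigoplus_{n\ge0}A^{\otimes_Rn}$. The symbol $a$ denotes the element $1\otimes1\in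 A_a$; products of arrows are written right-to-left ($ab$ means $b$ followed by $a$, defined when $h(b)=t(a)$); one has $az=g_a(z)a$ for $z\in F_{h(a)}\cap F_{t(a)}$, and field elements written next to arrows are elements of $F_i\subseteq R$ at the appropriate vertex. $\langle X\rangle$ denotes the two-sided ideal generated by $X$. Semilinear path algebra: for a quiver $\widehat Q$, a field $K$ and automorphisms $\sigma_b\in\operatorname{Gal}(K/F)$ for $b\in\widehat Q_1$, $K_{\boldsymbol\sigma}\widehat Q$ is the tensor ring over $S=\prod_{i\in\widehat Q_0}K$ of the $S$-$S$-bimodule $\bigoplus_b K^{\sigma_b}\otimes_KK$; equivalently the ring generated by $S$ and the arrows $b=e_{h(b)}be_{t(b)}$ subject to $b\lambda=\sigma_b(\lambda)b$ for $\lambda\in K$. When all $\sigma_b$ are trivial this is the ordinary path algebra $K\widehat Q$. *)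

theory Defs
  imports "HOL-Algebra.QuotRing"
begin

section \<open>Field-theoretic data (the big field is the whole type 'a)\<close>

definition subfield_set :: "'a::field set \<Rightarrow> bool" where
  "subfield_set K \<longleftrightarrow> 0 \<in> K \<and> 1 \<in> K \<and> (\<forall>x\<in>K. \<forall>y\<in>K. x + y \<in> K \<and> x - y \<in> K \<and> x * y \<in> K)
     \<and> (\<forall>x\<in>K. inverse x \<in> K)"

definition ext_degree_is :: "'a::field set \<Rightarrow> nat \<Rightarrow> bool" where
  "ext_degree_is K n \<longleftrightarrow> (\<exists>b :: nat \<Rightarrow> 'a.
      (\<forall>x. \<exists>c. (\<forall>i<n. c i \<in> K) \<and> x = (\<Sum>i<n. c i * b i)) \<and>
      (\<forall>c. (\<forall>i<n. c i \<in> K) \<longrightarrow> (\<Sum>i<n. c i * b i) = 0 \<longrightarrow> (\<forall>i<n. c i = 0)))"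

definition field_aut :: "('a::field \<Rightarrow> 'a) \<Rightarrow> bool" where
  "field_aut s \<longleftrightarrow> bij s \<and> (\<forall>x y. s (x + y) = s x + s y \<and> s (x * y) = s x * s y) \<and> s 1 = 1"

definition Gal :: "'a::field set \<Rightarrow> ('a \<Rightarrow> 'a) set" where
  "Gal K = {s. field_aut s \<and> (\<forall>x\<in>K. s x = x)}"

definition cyclic_galois :: "'a::field set \<Rightarrow> nat \<Rightarrow> ('a \<Rightarrow> 'a) \<Rightarrow> bool" where
  "cyclic_galois K n r \<longleftrightarrow> subfield_set K \<and> ext_degree_is K n \<and> finite (Gal K) \<and>
     card (Gal K) = n \<and> r \<in> Gal K \<and> Gal K = {r ^^ k | k. True}"

definition adjoin :: "'a::field set \<Rightarrow> 'a \<Rightarrow> 'a set" where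
  "adjoin K u = \<Inter>{M. subfield_set M \<and> K \<subseteq> M \<and> u \<in> M}"

type_synonym ('g,'a) fa = "'g list \<Rightarrow> 'a"

definition fa_mul :: "('g,'a::field) fa \<Rightarrow> ('g,'a) fa \<Rightarrow> ('g,'a) fa" where
  "fa_mul f g = (\<lambda>w. \<Sum>i\<le>length w. f (take i w) * g (drop i w))"

definition fa_scal :: "'a::field \<Rightarrow> ('g,'a) fa" where
  "fa_scal c = (\<lambda>w. if w = [] then c else 0)"

definition fa_gen :: "'g \<Rightarrow> ('g,'a::field) fa" where
  "fa_gen x = (\<lambda>w. if w = [x] then 1 else 0)"

definition fa_diff :: "('g,'a::field) fa \<Rightarrow> ('g,'a) fa \<Rightarrow> ('g,'a) fa" where
  "fa_diff f g = (\<lambda>w. f w - g w)"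

definition free_alg :: "'a::field set \<Rightarrow> (('g,'a) fa) ring" where
  "free_alg F = \<lparr> carrier = {f. finite {w. f w \<noteq> 0} \<and> range f \<subseteq> F},
                   mult = fa_mul, one = fa_scal 1,
                   zero = (\<lambda>w. 0), add = (\<lambda>f g w. f w + g w) \<rparr>"

datatype arrow = Alpha | Beta | Gamma | S1

datatype 'a sgen = V nat 'a | Arr arrow

text \<open>Generators: V i l stands for l e_i (l in the field at vertex i), Arr a for the arrow a.
  Vs: vertices, Fld: vertex fields, As: arrows, hh/tt: head/tail, tw: twist g_a acting on
  Fld (hh a) \<inter> Fld (tt a).  The relations present T_R(A) with R = prod Fld i and
  A_a = Fld(hh a)^{g_a} \<otimes>_{Fld(hh a) \<inter> Fld(tt a)} Fld(tt a), a = 1 \<otimes> 1.\<close>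
definition species_rels ::
  "'a::field set \<Rightarrow> nat set \<Rightarrow> (nat \<Rightarrow> 'a set) \<Rightarrow> arrow set \<Rightarrow> (arrow \<Rightarrow> nat) \<Rightarrow> (arrow \<Rightarrow> nat)
     \<Rightarrow> (arrow \<Rightarrow> 'a \<Rightarrow> 'a) \<Rightarrow> ('a sgen,'a) fa set" where
  "species_rels F Vs Fld As hh tt tw =
     {fa_gen (V i l) | i l. i \<notin> Vs \<or> l \<notin> Fld i}
   \<union> {fa_gen (Arr a) | a. a \<notin> As}
   \<union> {fa_diff (\<lambda>w. fa_gen (V i l) w + fa_gen (V i m) w) (fa_gen (V i (l + m)))
        | i l m. i \<in> Vs \<and> l \<in> Fld i \<and> m \<in> Fld i}
   \<union> {fa_diff (fa_mul (fa_gen (V i l)) (fa_gen (V i m))) (fa_gen (V i (l * m)))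
        | i l m. i \<in> Vs \<and> l \<in> Fld i \<and> m \<in> Fld i}
   \<union> {fa_mul (fa_gen (V i l)) (fa_gen (V j m))
        | i j l m. i \<in> Vs \<and> j \<in> Vs \<and> i \<noteq> j \<and> l \<in> Fld i \<and> m \<in> Fld j}
   \<union> {fa_diff (\<lambda>w. \<Sum>i\<in>Vs. fa_gen (V i 1) w) (fa_scal 1)}
   \<union> {fa_diff (fa_mul (fa_scal c) (fa_gen (V i l))) (fa_gen (V i (c * l)))
        | c i l. c \<in> F \<and> i \<in> Vs \<and> l \<in> Fld i}
   \<union> {fa_diff (fa_gen (Arr a))
        (fa_mul (fa_mul (fa_gen (V (hh a) 1)) (fa_gen (Arr a))) (fa_gen (V (tt a) 1)))
        | a. a \<in> As}
   \<union> {fa_diff (fa_mul (fa_gen (Arr a)) (fa_gen (V (tt a) z)))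
              (fa_mul (fa_gen (V (hh a) (tw a z))) (fa_gen (Arr a)))
        | a z. a \<in> As \<and> z \<in> Fld (hh a) \<inter> Fld (tt a)}"

definition species_quot ::
  "'a::field set \<Rightarrow> nat set \<Rightarrow> (nat \<Rightarrow> 'a set) \<Rightarrow> arrow set \<Rightarrow> (arrow \<Rightarrow> nat) \<Rightarrow> (arrow \<Rightarrow> nat)
     \<Rightarrow> (arrow \<Rightarrow> 'a \<Rightarrow> 'a) \<Rightarrow> ('a sgen,'a) fa set \<Rightarrow> (('a sgen,'a) fa set) ring" where
  "species_quot F Vs Fld As hh tt tw X =
     free_alg F Quot (genideal (free_alg F) (species_rels F Vs Fld As hh tt tw \<union> X))"

definition species_scal ::
  "'a::field set \<Rightarrow> nat set \<Rightarrow> (nat \<Rightarrow> 'a set) \<Rightarrow> arrow set \<Rightarrow> (arrow \<Rightarrow> nat) \<Rightarrow> (arrow \<Rightarrow> nat)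
     \<Rightarrow> (arrow \<Rightarrow> 'a \<Rightarrow> 'a) \<Rightarrow> ('a sgen,'a) fa set \<Rightarrow> 'a \<Rightarrow> ('a sgen,'a) fa set" where
  "species_scal F Vs Fld As hh tt tw X c =
     a_r_coset (free_alg F) (genideal (free_alg F) (species_rels F Vs Fld As hh tt tw \<union> X)) (fa_scal c)"

definition F_alg_iso :: "'a::field set \<Rightarrow> ('b, 'c) ring_scheme \<Rightarrow> ('d, 'e) ring_scheme
    \<Rightarrow> ('a \<Rightarrow> 'b) \<Rightarrow> ('a \<Rightarrow> 'd) \<Rightarrow> bool" where
  "F_alg_iso F A B sA sB \<longleftrightarrow> (\<exists>h. h \<in> ring_iso A B \<and> (\<forall>c\<in>F. h (sA c) = sB c))"

definition qhd :: "arrow \<Rightarrow> nat" where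
  "qhd a = (case a of Alpha \<Rightarrow> 1 | Beta \<Rightarrow> 2 | Gamma \<Rightarrow> 3 | S1 \<Rightarrow> 1)"
definition qtl :: "arrow \<Rightarrow> nat" where
  "qtl a = (case a of Alpha \<Rightarrow> 2 | Beta \<Rightarrow> 3 | Gamma \<Rightarrow> 1 | S1 \<Rightarrow> 1)"

definition zero_rels :: "('a sgen,'a::field) fa set" where
  "zero_rels = {fa_mul (fa_gen (Arr Alpha)) (fa_gen (Arr Beta)),
                fa_mul (fa_gen (Arr Beta)) (fa_gen (Arr Gamma)),
                fa_mul (fa_gen (Arr Gamma)) (fa_gen (Arr Alpha))}"

definition loop_rel :: "'a::field \<Rightarrow> ('a sgen,'a) fa" where
  "loop_rel c = fa_diff (fa_mul (fa_gen (Arr S1)) (fa_gen (Arr S1))) (fa_gen (V 1 c))"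

end

theory Submission
  imports Defs "HOL-Algebra.Embedded_Algebras"
begin

lemma sum_in_subfield:
  assumes "subfield_set F" "\<And>x. x \<in> S \<Longrightarrow> f x \<in> F"
  shows "sum f S \<in> F"
proof (cases "finite S")
  case True thus ?thesis using assms(2)
    by (induction S rule: finite_induct) (use assms(1) in \<open>auto simp: subfield_set_def\<close>)
next
  case False thus ?thesis using assms(1) by (simp add: subfield_set_def)
qed

lemma tri_swap:
  fixes T :: "nat \<Rightarrow> nat \<Rightarrow> 'a::comm_monoid_add"
  shows "(\<Sum>i\<le>n. \<Sum>j\<le>i. T j (i - j)) = (\<Sum>j\<le>n. \<Sum>k\<le>n - j. T j k)"
proof (induction n)
  case 0 thus ?case by simp
next
  case (Suc n)
  have "(\<Sum>j\<le>Suc n. \<Sum>k\<le>Suc n - j. T j k) = (\<Sum>j\<le>n. \<Sum>k\<le>Suc n - j. T j k) + T (Suc n) 0"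
    by simp
  also have "(\<Sum>j\<le>n. \<Sum>k\<le>Suc n - j. T j k) = (\<Sum>j\<le>n. (\<Sum>k\<le>n - j. T j k) + T j (Suc n - j))"
    by (rule sum.cong) (auto simp: Suc_diff_le)
  also have "\<dots> = (\<Sum>j\<le>n. \<Sum>k\<le>n - j. T j k) + (\<Sum>j\<le>n. T j (Suc n - j))"
    by (simp add: sum.distrib)
  finally show ?case using Suc by (simp add: add.assoc)
qed

lemma fa_mul_assoc: "fa_mul (fa_mul f g) h = fa_mul f (fa_mul g (h :: ('g,'a::field) fa))"
proof
  fix w :: "'g list"
  define n where "n = length w"
  define T where "T = (\<lambda>j k. f (take j w) * g (take k (drop j w)) * h (drop (j + k) w))"
  have "fa_mul (fa_mul f g) h w = (\<Sum>i\<le>n. \<Sum>j\<le>i. T j (i - j))"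
    unfolding fa_mul_def n_def T_def
    by (rule sum.cong) (auto simp: sum_distrib_right min_def take_drop intro!: sum.cong)
  also have "\<dots> = (\<Sum>j\<le>n. \<Sum>k\<le>n - j. T j k)" by (rule tri_swap)
  also have "\<dots> = fa_mul f (fa_mul g h) w"
    unfolding fa_mul_def n_def T_def
    by (rule sum.cong) (auto simp: sum_distrib_left mult.assoc add.commute)
  finally show "fa_mul (fa_mul f g) h w = fa_mul f (fa_mul g h) w" .
qed

definition fa_carr :: "'a::field set \<Rightarrow> ('g,'a) fa set" where
  "fa_carr F = {f. finite {w. f w \<noteq> 0} \<and> range f \<subseteq> F}"

lemma free_alg_simps [simp]:
  "carrier (free_alg F) = fa_carr F"
  "mult (free_alg F) = fa_mul"
  "one (free_alg F) = fa_scal 1"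
  "zero (free_alg F) = (\<lambda>w. 0)"
  "add (free_alg F) = (\<lambda>f g w. f w + g w)"
  by (simp_all add: free_alg_def fa_carr_def)

lemma fa_carrI: "finite {w. f w \<noteq> 0} \<Longrightarrow> (\<And>w. f w \<in> F) \<Longrightarrow> f \<in> fa_carr F"
  by (auto simp: fa_carr_def)

lemma fa_carrD: "f \<in> fa_carr F \<Longrightarrow> finite {w. f w \<noteq> 0}" "f \<in> fa_carr F \<Longrightarrow> f w \<in> F"
  by (auto simp: fa_carr_def)

lemma fa_mul_supp:
  "{w. fa_mul f g w \<noteq> 0} \<subseteq> (\<lambda>(a,b). a @ b) ` ({w. f w \<noteq> 0} \<times> {w. g w \<noteq> 0})"
proof
  fix w assume "w \<in> {w. fa_mul f g w \<noteq> 0}"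
  then obtain i where "f (take i w) * g (drop i w) \<noteq> 0"
    unfolding fa_mul_def by (metis (mono_tags, lifting) mem_Collect_eq sum.neutral)
  then show "w \<in> (\<lambda>(a,b). a @ b) ` ({w. f w \<noteq> 0} \<times> {w. g w \<noteq> 0})"
    by (intro image_eqI[of _ _ "(take i w, drop i w)"]) auto
qed

lemma fa_mul_carr:
  assumes F: "subfield_set F" and f: "f \<in> fa_carr F" and g: "g \<in> fa_carr F"
  shows "fa_mul f g \<in> fa_carr F"
proof (rule fa_carrI)
  show "finite {w. fa_mul f g w \<noteq> 0}"
    by (rule finite_subset[OF fa_mul_supp]) (use fa_carrD(1)[OF f] fa_carrD(1)[OF g] in auto)
  fix w show "fa_mul f g w \<in> F"
    unfolding fa_mul_def
    by (rule sum_in_subfield[OF F]) (use F fa_carrD(2)[OF f] fa_carrD(2)[OF g] in \<open>auto simp: subfield_set_def\<close>)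
qed

lemma fa_scal_carr: "subfield_set F \<Longrightarrow> c \<in> F \<Longrightarrow> fa_scal c \<in> fa_carr F"
  by (rule fa_carrI) (auto simp: fa_scal_def subfield_set_def)

lemma fa_gen_carr: "subfield_set F \<Longrightarrow> fa_gen x \<in> fa_carr F"
  by (rule fa_carrI) (auto simp: fa_gen_def subfield_set_def)

lemma fa_add_carr: "subfield_set F \<Longrightarrow> f \<in> fa_carr F \<Longrightarrow> g \<in> fa_carr F \<Longrightarrow> (\<lambda>w. f w + g w) \<in> fa_carr F"
  apply (rule fa_carrI)
   apply (rule finite_subset[of _ "{w. f w \<noteq> 0} \<union> {w. g w \<noteq> 0}"])
  by (auto simp: fa_carr_def subfield_set_def)

lemma fa_neg_carr: "subfield_set F \<Longrightarrow> f \<in> fa_carr F \<Longrightarrow> (\<lambda>w. - f w) \<in> fa_carr F"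
  apply (rule fa_carrI)
  apply (simp add: fa_carr_def)
  by (metis diff_0 fa_carrD(2) subfield_set_def)

lemma fa_zero_carr: "subfield_set F \<Longrightarrow> (\<lambda>w. 0) \<in> fa_carr F"
  by (rule fa_carrI) (auto simp: subfield_set_def)

lemma fa_scal_mul: "fa_mul (fa_scal c) f = (\<lambda>w. c * f w)"
proof
  fix w
  have "fa_mul (fa_scal c) f w = (\<Sum>i\<in>{0}. (fa_scal c (take i w)) * f (drop i w))"
    unfolding fa_mul_def by (rule sum.mono_neutral_right) (auto simp: fa_scal_def)
  thus "fa_mul (fa_scal c) f w = c * f w" by (simp add: fa_scal_def)
qed

lemma fa_mul_scal: "fa_mul f (fa_scal c) = (\<lambda>w. f w * c)"
proof
  fix w
  have "fa_mul f (fa_scal c) w = (\<Sum>i\<in>{length w}. f (take i w) * (fa_scal c (drop i w)))"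
    unfolding fa_mul_def by (rule sum.mono_neutral_right) (auto simp: fa_scal_def)
  thus "fa_mul f (fa_scal c) w = f w * c" by (simp add: fa_scal_def)
qed

lemma fa_mul_ldistr: "fa_mul (\<lambda>w. f w + g w) h = (\<lambda>w. fa_mul f h w + fa_mul g h w)"
  by (auto simp: fa_mul_def distrib_right sum.distrib)
lemma fa_mul_rdistr: "fa_mul h (\<lambda>w. f w + g w) = (\<lambda>w. fa_mul h f w + fa_mul h g w)"
  by (auto simp: fa_mul_def distrib_left sum.distrib)

lemma ring_free_alg: assumes F: "subfield_set F" shows "ring (free_alg F)"
proof (rule ringI)
  show "abelian_group (free_alg F)"
    apply (rule abelian_groupI)
    using F fa_add_carr fa_zero_carr
    apply (auto simp: add.assoc add.commute)
    subgoal for x by (intro bexI[of _ "\<lambda>w. - x w"]) (auto simp: fa_neg_carr)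
    done
  show "monoid (free_alg F)"
    apply (rule monoidI)
    using F fa_mul_carr fa_scal_carr[of F 1]
    by (auto simp: fa_mul_assoc fa_scal_mul fa_mul_scal subfield_set_def)
qed (auto simp: fa_mul_ldistr fa_mul_rdistr)

definition fmono :: "'a::field \<Rightarrow> 'g list \<Rightarrow> ('g,'a) fa" where
  "fmono c u = (\<lambda>w. if w = u then c else 0)"

lemma mono_carr: "subfield_set F \<Longrightarrow> c \<in> F \<Longrightarrow> fmono c u \<in> fa_carr F"
  by (rule fa_carrI) (auto simp: fmono_def subfield_set_def)

lemma tk: "take i (u @ v) = u \<Longrightarrow> i \<le> length (u @ v) \<Longrightarrow> i = length u"
  by (metis length_take min.absorb2)

lemma mono_mul: "fa_mul (fmono a u) (fmono b v) = fmono (a * b) (u @ v)"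
proof
  fix w
  show "fa_mul (fmono a u) (fmono b v) w = fmono (a * b) (u @ v) w"
  proof (cases "w = u @ v")
    case True
    have "fa_mul (fmono a u) (fmono b v) w = (\<Sum>i\<in>{length u}. fmono a u (take i w) * fmono b v (drop i w))"
      unfolding fa_mul_def
    proof (rule sum.mono_neutral_right)
      show "\<forall>i\<in>{..length w} - {length u}. fmono a u (take i w) * fmono b v (drop i w) = 0"
      proof
        fix i assume i: "i \<in> {..length w} - {length u}"
        have "take i w \<noteq> u" using tk[of i u v] i True by auto
        thus "fmono a u (take i w) * fmono b v (drop i w) = 0" by (simp add: fmono_def)
      qed
    qed (use True in auto)
    thus ?thesis by (simp add: True fmono_def)
  next
    case False
    have z: "fmono a u (take i w) * fmono b v (drop i w) = 0" for i
      using False by (auto simp: fmono_def)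
    have "fa_mul (fmono a u) (fmono b v) w = 0" unfolding fa_mul_def by (simp only: z sum.neutral_const)
    thus ?thesis using False by (simp add: fmono_def)
  qed
qed

lemma fa_gen_mono: "fa_gen x = fmono 1 [x]" by (auto simp: fa_gen_def fmono_def)
lemma fa_scal_mono: "fa_scal c = fmono c []" by (auto simp: fa_scal_def fmono_def)

lemma finsum_apply:
  assumes F: "subfield_set F" and S: "finite S" and h: "\<And>s. s \<in> S \<Longrightarrow> h s \<in> fa_carr F"
  shows "finsum (free_alg F) h S w = (\<Sum>s\<in>S. h s w)"
  using S h
proof (induction S rule: finite_induct)
  case empty
  interpret A: ring "free_alg F" by (rule ring_free_alg[OF F])
  show ?case by simp
next
  case (insert x S)
  interpret A: ring "free_alg F" by (rule ring_free_alg[OF F])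
  have "finsum (free_alg F) h (insert x S) = h x \<oplus>\<^bsub>free_alg F\<^esub> finsum (free_alg F) h S"
    by (rule A.finsum_insert) (use insert in auto)
  then show ?case using insert by simp
qed

lemma fa_decomp:
  assumes F: "subfield_set F" and f: "f \<in> fa_carr F"
  shows "f = finsum (free_alg F) (\<lambda>u. fmono (f u) u) {w. f w \<noteq> 0}"
proof
  fix w
  have "finsum (free_alg F) (\<lambda>u. fmono (f u) u) {w. f w \<noteq> 0} w = (\<Sum>u\<in>{w. f w \<noteq> 0}. fmono (f u) u w)"
    by (rule finsum_apply[OF F fa_carrD(1)[OF f]]) (use F f in \<open>auto intro: mono_carr fa_carrD\<close>)
  also have "\<dots> = f w"
    by (cases "f w = 0") (auto simp: fmono_def fa_carrD(1)[OF f] sum.delta)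
  finally show "f w = finsum (free_alg F) (\<lambda>u. fmono (f u) u) {w. f w \<noteq> 0} w" ..
qed

locale fa_eval = C: ring C for C :: "('c, 'm) ring_scheme" (structure) +
  fixes F :: "'a::field set" and \<sigma> :: "'a \<Rightarrow> 'c" and g :: "'g \<Rightarrow> 'c"
  assumes F: "subfield_set F"
    and \<sigma>_carr: "c \<in> F \<Longrightarrow> \<sigma> c \<in> carrier C"
    and \<sigma>_add: "a \<in> F \<Longrightarrow> b \<in> F \<Longrightarrow> \<sigma> (a + b) = \<sigma> a \<oplus> \<sigma> b"
    and \<sigma>_mul: "a \<in> F \<Longrightarrow> b \<in> F \<Longrightarrow> \<sigma> (a * b) = \<sigma> a \<otimes> \<sigma> b"
    and \<sigma>_one: "\<sigma> 1 = \<one>"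
    and \<sigma>_zero: "\<sigma> 0 = \<zero>"
    and \<sigma>_comm: "c \<in> F \<Longrightarrow> x \<in> carrier C \<Longrightarrow> \<sigma> c \<otimes> x = x \<otimes> \<sigma> c"
    and g_carr: "g y \<in> carrier C"
begin

interpretation A: ring "free_alg F" by (rule ring_free_alg[OF F])

definition wp :: "'g list \<Rightarrow> 'c" where "wp w = foldr (\<lambda>x acc. g x \<otimes> acc) w \<one>"

lemma wp_carr [simp]: "wp w \<in> carrier C"
  by (induction w) (auto simp: wp_def g_carr)

lemma wp_append: "wp (u @ v) = wp u \<otimes> wp v"
  by (induction u) (auto simp: wp_def g_carr C.m_assoc[symmetric] wp_carr[unfolded wp_def])

definition ev :: "('g,'a) fa \<Rightarrow> 'c" where
  "ev f = finsum C (\<lambda>w. \<sigma> (f w) \<otimes> wp w) {w. f w \<noteq> 0}"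

lemma ev_ext:
  assumes f: "f \<in> fa_carr F" and S: "finite S" "{w. f w \<noteq> 0} \<subseteq> S"
  shows "ev f = finsum C (\<lambda>w. \<sigma> (f w) \<otimes> wp w) S"
  unfolding ev_def
  by (rule C.add.finprod_mono_neutral_cong_left) (use S f in \<open>auto simp: \<sigma>_zero \<sigma>_carr fa_carrD\<close>)

lemma ev_carr: "f \<in> fa_carr F \<Longrightarrow> ev f \<in> carrier C"
  unfolding ev_def by (rule C.finsum_closed) (auto simp: \<sigma>_carr fa_carrD)

lemma ev_add:
  assumes f: "f \<in> fa_carr F" and h: "h \<in> fa_carr F"
  shows "ev (\<lambda>w. f w + h w) = ev f \<oplus> ev h"
proof -
  let ?S = "{w. f w \<noteq> 0} \<union> {w. h w \<noteq> 0}"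
  have fin: "finite ?S" using fa_carrD(1)[OF f] fa_carrD(1)[OF h] by auto
  have "ev (\<lambda>w. f w + h w) = finsum C (\<lambda>w. \<sigma> (f w + h w) \<otimes> wp w) ?S"
    by (rule ev_ext[OF fa_add_carr[OF F f h] fin]) auto
  also have "\<dots> = finsum C (\<lambda>w. \<sigma> (f w) \<otimes> wp w \<oplus> \<sigma> (h w) \<otimes> wp w) ?S"
    by (rule C.finsum_cong') (auto simp: \<sigma>_add \<sigma>_carr fa_carrD[OF f] fa_carrD[OF h] C.l_distr)
  also have "\<dots> = finsum C (\<lambda>w. \<sigma> (f w) \<otimes> wp w) ?S \<oplus> finsum C (\<lambda>w. \<sigma> (h w) \<otimes> wp w) ?S"
    by (rule C.finsum_addf) (auto simp: \<sigma>_carr fa_carrD[OF f] fa_carrD[OF h])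
  also have "\<dots> = ev f \<oplus> ev h"
    using ev_ext[OF f fin] ev_ext[OF h fin] by auto
  finally show ?thesis .
qed

lemma ev_zero: "ev (\<lambda>w. 0) = \<zero>"
  by (simp add: ev_def)

lemma ev_mono: assumes c: "c \<in> F" shows "ev (fmono c u) = \<sigma> c \<otimes> wp u"
proof -
  have m: "fmono c u \<in> fa_carr F" using mono_carr F c by auto
  show ?thesis by (subst ev_ext[OF m, of "{u}"]) (auto simp: fmono_def \<sigma>_carr c)
qed

lemma ev_finsum:
  assumes S: "finite S" and h: "\<And>s. s \<in> S \<Longrightarrow> h s \<in> fa_carr F"
  shows "ev (finsum (free_alg F) h S) = finsum C (\<lambda>s. ev (h s)) S"
  using S h
proof (induction S rule: finite_induct)
  case empty
  then show ?case by (simp add: ev_zero)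
next
  case (insert x S)
  have "finsum (free_alg F) h (insert x S) = h x \<oplus>\<^bsub>free_alg F\<^esub> finsum (free_alg F) h S"
    by (rule A.finsum_insert) (use insert in auto)
  moreover have "finsum (free_alg F) h S \<in> fa_carr F"
    using A.finsum_closed[of h S] insert by auto
  moreover have "finsum C (\<lambda>s. ev (h s)) (insert x S) = ev (h x) \<oplus> finsum C (\<lambda>s. ev (h s)) S"
    by (rule C.finsum_insert) (use insert in \<open>auto simp: ev_carr\<close>)
  ultimately show ?case using insert by (simp add: ev_add)
qed

lemma rearr:
  assumes c: "c \<in> F" and d: "d \<in> F"
  shows "\<sigma> (c * d) \<otimes> wp (u @ v) = (\<sigma> c \<otimes> wp u) \<otimes> (\<sigma> d \<otimes> wp v)"
proof -
  have cc: "\<sigma> c \<in> carrier C" "\<sigma> d \<in> carrier C" using c d \<sigma>_carr by auto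
  have "\<sigma> (c * d) \<otimes> wp (u @ v) = (\<sigma> c \<otimes> \<sigma> d) \<otimes> (wp u \<otimes> wp v)"
    by (simp add: \<sigma>_mul c d wp_append)
  also have "\<dots> = \<sigma> c \<otimes> ((\<sigma> d \<otimes> wp u) \<otimes> wp v)"
    using cc by (simp add: C.m_assoc)
  also have "\<dots> = \<sigma> c \<otimes> ((wp u \<otimes> \<sigma> d) \<otimes> wp v)"
    by (simp add: \<sigma>_comm d)
  also have "\<dots> = (\<sigma> c \<otimes> wp u) \<otimes> (\<sigma> d \<otimes> wp v)"
    using cc by (simp add: C.m_assoc)
  finally show ?thesis .
qed

lemma ev_mul:
  assumes f: "f \<in> fa_carr F" and h: "h \<in> fa_carr F"
  shows "ev (fa_mul f h) = ev f \<otimes> ev h"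
proof -
  let ?Sf = "{w. f w \<noteq> 0}" and ?Sh = "{w. h w \<noteq> 0}"
  let ?A = "free_alg F"
  have finf: "finite ?Sf" and finh: "finite ?Sh" using f h by (auto dest: fa_carrD)
  have mf: "\<And>u. fmono (f u) u \<in> fa_carr F" using f F by (auto intro: mono_carr fa_carrD)
  have mh: "\<And>u. fmono (h u) u \<in> fa_carr F" using h F by (auto intro: mono_carr fa_carrD)
  have fhc: "\<And>u v. f u * h v \<in> F" using f h F by (auto simp: subfield_set_def fa_carrD)
  have cl1: "\<And>u. (\<lambda>v. fmono (f u * h v) (u @ v)) \<in> ?Sh \<rightarrow> carrier ?A"
    using fhc mono_carr[OF F] by auto
  have cl2: "\<And>u. finsum ?A (\<lambda>v. fmono (f u * h v) (u @ v)) ?Sh \<in> fa_carr F"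
    using A.finsum_closed[OF cl1] by simp
  have clh: "finsum ?A (\<lambda>v. fmono (h v) v) ?Sh \<in> fa_carr F"
    using A.finsum_closed[of "\<lambda>v. fmono (h v) v" ?Sh] mh by (simp add: Pi_def)
  have sf: "\<And>u. \<sigma> (f u) \<in> carrier C" and sh: "\<And>u. \<sigma> (h u) \<in> carrier C"
    using f h by (auto simp: \<sigma>_carr fa_carrD)
  have "fa_mul f h = finsum ?A (\<lambda>u. fmono (f u) u) ?Sf \<otimes>\<^bsub>?A\<^esub>
                      finsum ?A (\<lambda>v. fmono (h v) v) ?Sh"
    using fa_decomp[OF F f] fa_decomp[OF F h] by simp
  also have "\<dots> = finsum ?A (\<lambda>u. fmono (f u) u \<otimes>\<^bsub>?A\<^esub> finsum ?A (\<lambda>v. fmono (h v) v) ?Sh) ?Sf"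
    by (rule A.finsum_ldistr[OF finf]) (use mf clh in \<open>auto simp: Pi_def\<close>)
  also have "\<dots> = finsum ?A (\<lambda>u. finsum ?A (\<lambda>v. fmono (f u * h v) (u @ v)) ?Sh) ?Sf"
  proof (rule A.finsum_cong')
    show "(\<lambda>u. finsum ?A (\<lambda>v. fmono (f u * h v) (u @ v)) ?Sh) \<in> ?Sf \<rightarrow> carrier ?A"
      using cl2 by simp
    fix u assume "u \<in> ?Sf"
    have "fmono (f u) u \<otimes>\<^bsub>?A\<^esub> finsum ?A (\<lambda>v. fmono (h v) v) ?Sh =
          finsum ?A (\<lambda>v. fmono (f u) u \<otimes>\<^bsub>?A\<^esub> fmono (h v) v) ?Sh"
      by (rule A.finsum_rdistr[OF finh]) (use mf mh in \<open>auto simp: Pi_def\<close>)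
    also have "\<dots> = finsum ?A (\<lambda>v. fmono (f u * h v) (u @ v)) ?Sh"
      by (simp add: mono_mul)
    finally show "fmono (f u) u \<otimes>\<^bsub>?A\<^esub> finsum ?A (\<lambda>v. fmono (h v) v) ?Sh =
          finsum ?A (\<lambda>v. fmono (f u * h v) (u @ v)) ?Sh" .
  qed simp
  finally have eq: "fa_mul f h = finsum ?A (\<lambda>u. finsum ?A (\<lambda>v. fmono (f u * h v) (u @ v)) ?Sh) ?Sf" .
  have "ev (fa_mul f h) = finsum C (\<lambda>u. ev (finsum ?A (\<lambda>v. fmono (f u * h v) (u @ v)) ?Sh)) ?Sf"
    unfolding eq by (rule ev_finsum[OF finf cl2])
  also have "\<dots> = finsum C (\<lambda>u. finsum C (\<lambda>v. (\<sigma> (f u) \<otimes> wp u) \<otimes> (\<sigma> (h v) \<otimes> wp v)) ?Sh) ?Sf"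
  proof (rule C.finsum_cong')
    show "(\<lambda>u. finsum C (\<lambda>v. (\<sigma> (f u) \<otimes> wp u) \<otimes> (\<sigma> (h v) \<otimes> wp v)) ?Sh) \<in> ?Sf \<rightarrow> carrier C"
      using sf sh by (auto intro!: C.finsum_closed)
    fix u assume "u \<in> ?Sf"
    have "ev (finsum ?A (\<lambda>v. fmono (f u * h v) (u @ v)) ?Sh) = finsum C (\<lambda>v. ev (fmono (f u * h v) (u @ v))) ?Sh"
      by (rule ev_finsum[OF finh]) (use cl1 in auto)
    also have "\<dots> = finsum C (\<lambda>v. (\<sigma> (f u) \<otimes> wp u) \<otimes> (\<sigma> (h v) \<otimes> wp v)) ?Sh"
    proof (rule C.finsum_cong')
      show "(\<lambda>v. (\<sigma> (f u) \<otimes> wp u) \<otimes> (\<sigma> (h v) \<otimes> wp v)) \<in> ?Sh \<rightarrow> carrier C"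
        using sf sh by auto
      fix v assume "v \<in> ?Sh"
      show "ev (fmono (f u * h v) (u @ v)) = (\<sigma> (f u) \<otimes> wp u) \<otimes> (\<sigma> (h v) \<otimes> wp v)"
        using ev_mono[OF fhc] rearr f h fa_carrD by metis
    qed simp
    finally show "ev (finsum ?A (\<lambda>v. fmono (f u * h v) (u @ v)) ?Sh) = finsum C (\<lambda>v. (\<sigma> (f u) \<otimes> wp u) \<otimes> (\<sigma> (h v) \<otimes> wp v)) ?Sh" .
  qed simp
  also have "\<dots> = finsum C (\<lambda>u. (\<sigma> (f u) \<otimes> wp u) \<otimes> ev h) ?Sf"
  proof (rule C.finsum_cong')
    show "(\<lambda>u. (\<sigma> (f u) \<otimes> wp u) \<otimes> ev h) \<in> ?Sf \<rightarrow> carrier C"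
      using sf ev_carr[OF h] by auto
    fix u assume "u \<in> ?Sf"
    show "finsum C (\<lambda>v. (\<sigma> (f u) \<otimes> wp u) \<otimes> (\<sigma> (h v) \<otimes> wp v)) ?Sh = (\<sigma> (f u) \<otimes> wp u) \<otimes> ev h"
      unfolding ev_def[of h]
      by (rule C.finsum_rdistr[symmetric, OF finh]) (use sf sh in auto)
  qed simp
  also have "\<dots> = ev f \<otimes> ev h"
    unfolding ev_def[of f]
    by (rule C.finsum_ldistr[symmetric, OF finf]) (use sf ev_carr[OF h] in auto)
  finally show ?thesis .
qed

lemma ev_scal: "c \<in> F \<Longrightarrow> ev (fa_scal c) = \<sigma> c"
  by (simp add: fa_scal_mono ev_mono wp_def \<sigma>_carr)

lemma ev_gen: "ev (fa_gen x) = g x"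
  using F by (simp add: fa_gen_mono ev_mono wp_def \<sigma>_one g_carr subfield_set_def)

lemma ev_hom: "ev \<in> ring_hom (free_alg F) C"
  apply (rule ring_hom_memI)
  using F by (auto simp: ev_carr ev_mul ev_add ev_scal \<sigma>_one subfield_set_def)

end

lemma hom_finsum_gen:
  assumes A: "ring A" and C: "ring C" and phi: "\<phi> \<in> ring_hom A C"
    and S: "finite S" and h: "h \<in> S \<rightarrow> carrier A"
  shows "\<phi> (finsum A h S) = finsum C (\<lambda>s. \<phi> (h s)) S"
  using S h
proof (induction S rule: finite_induct)
  case empty
  interpret ring_hom_ring A C \<phi> by (rule ring_hom_ringI2[OF A C phi])
  show ?case by simp
next
  case (insert x S)
  interpret ring_hom_ring A C \<phi> by (rule ring_hom_ringI2[OF A C phi])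
  have "finsum A h (insert x S) = h x \<oplus>\<^bsub>A\<^esub> finsum A h S"
    by (rule R.finsum_insert) (use insert in auto)
  moreover have "finsum C (\<lambda>s. \<phi> (h s)) (insert x S) = \<phi> (h x) \<oplus>\<^bsub>C\<^esub> finsum C (\<lambda>s. \<phi> (h s)) S"
    by (rule S.finsum_insert) (use insert in \<open>auto intro: hom_closed\<close>)
  ultimately show ?case using insert by (simp add: R.finsum_closed)
qed

lemma hom_agree:
  assumes F: "subfield_set F" and C: "ring C"
    and phi: "\<phi> \<in> ring_hom (free_alg F) C" and psi: "\<psi> \<in> ring_hom (free_alg F) C"
    and gen: "\<And>x. \<phi> (fa_gen x) = \<psi> (fa_gen x)"
    and scal: "\<And>c. c \<in> F \<Longrightarrow> \<phi> (fa_scal c) = \<psi> (fa_scal c)"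
    and f: "f \<in> fa_carr F"
  shows "\<phi> f = \<psi> f"
proof -
  have A: "ring (free_alg F)" by (rule ring_free_alg[OF F])
  have F1: "1 \<in> F" using F by (simp add: subfield_set_def)
  have m1: "\<phi> (fmono 1 u) = \<psi> (fmono 1 u)" for u
  proof (induction u)
    case Nil
    then show ?case using scal[OF F1] by (simp add: fa_scal_mono)
  next
    case (Cons x u)
    have e: "fmono 1 (x # u) = fa_mul (fa_gen x) (fmono 1 u)"
      by (simp add: fa_gen_mono mono_mul)
    have c1: "fa_gen x \<in> carrier (free_alg F)" and c2: "fmono 1 u \<in> carrier (free_alg F)"
      using fa_gen_carr[OF F] mono_carr[OF F F1] by auto
    have "\<phi> (fmono 1 (x # u)) = \<phi> (fa_gen x) \<otimes>\<^bsub>C\<^esub> \<phi> (fmono 1 u)"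
      "\<psi> (fmono 1 (x # u)) = \<psi> (fa_gen x) \<otimes>\<^bsub>C\<^esub> \<psi> (fmono 1 u)"
      using ring_hom_mult[OF phi c1 c2] ring_hom_mult[OF psi c1 c2] unfolding e by simp_all
    thus ?case using gen Cons by simp
  qed
  have mc: "\<phi> (fmono c u) = \<psi> (fmono c u)" if c: "c \<in> F" for c u
  proof -
    have e: "fmono c u = fa_mul (fa_scal c) (fmono 1 u)"
      by (simp add: fa_scal_mono mono_mul)
    have c1: "fa_scal c \<in> carrier (free_alg F)" and c2: "fmono 1 u \<in> carrier (free_alg F)"
      using fa_scal_carr[OF F c] mono_carr[OF F F1] by auto
    show ?thesis
      using ring_hom_mult[OF phi c1 c2] ring_hom_mult[OF psi c1 c2] scal[OF c] m1[of u] unfolding e by simp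
  qed
  have fin: "finite {w. f w \<noteq> 0}" using fa_carrD(1)[OF f] .
  have hc: "(\<lambda>u. fmono (f u) u) \<in> {w. f w \<noteq> 0} \<rightarrow> carrier (free_alg F)"
    using mono_carr[OF F] fa_carrD(2)[OF f] by auto
  have "\<phi> f = finsum C (\<lambda>u. \<phi> (fmono (f u) u)) {w. f w \<noteq> 0}"
    by (subst fa_decomp[OF F f]) (rule hom_finsum_gen[OF A C phi fin hc])
  also have "\<dots> = finsum C (\<lambda>u. \<psi> (fmono (f u) u)) {w. f w \<noteq> 0}"
    using mc fa_carrD(2)[OF f] by simp
  also have "\<dots> = \<psi> f"
    by (subst (2) fa_decomp[OF F f]) (rule hom_finsum_gen[OF A C psi fin hc, symmetric])
  finally show ?thesis .
qed

lemma quot_lift: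
  assumes A: "ring A" and I: "ideal I A" and C: "ring C" and phi: "\<phi> \<in> ring_hom A C"
    and kill: "\<forall>i\<in>I. \<phi> i = \<zero>\<^bsub>C\<^esub>"
  shows "(\<lambda>X. the_elem (\<phi> ` X)) \<in> ring_hom (A Quot I) C"
    and "\<And>a. a \<in> carrier A \<Longrightarrow> the_elem (\<phi> ` (I +>\<^bsub>A\<^esub> a)) = \<phi> a"
proof -
  interpret ring_hom_ring A C \<phi> by (rule ring_hom_ringI2[OF A C phi])
  interpret I: ideal I A by (rule I)
  have ev: "the_elem (\<phi> ` (I +>\<^bsub>A\<^esub> a)) = \<phi> a" if a: "a \<in> carrier A" for a
  proof -
    have "\<phi> ` (I +>\<^bsub>A\<^esub> a) = {\<phi> a}"
    proof -
      have "\<phi> ` (I +>\<^bsub>A\<^esub> a) = (\<lambda>i. \<phi> (i \<oplus>\<^bsub>A\<^esub> a)) ` I"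
        unfolding a_r_coset_def' by auto
      also have "\<dots> = (\<lambda>i. \<phi> a) ` I"
        by (rule image_cong[OF refl]) (use a kill I.a_Hcarr in auto)
      also have "\<dots> = {\<phi> a}" by (rule image_constant[OF I.zero_closed])
      finally show ?thesis .
    qed
    thus ?thesis by simp
  qed
  show "\<And>a. a \<in> carrier A \<Longrightarrow> the_elem (\<phi> ` (I +>\<^bsub>A\<^esub> a)) = \<phi> a" by (rule ev)
  have pi: "(+>\<^bsub>A\<^esub>) I \<in> ring_hom A (A Quot I)" by (rule I.rcos_ring_hom)
  have cq: "X \<in> carrier (A Quot I) \<Longrightarrow> \<exists>x\<in>carrier A. X = I +>\<^bsub>A\<^esub> x" for X
    unfolding FactRing_def A_RCOSETS_def' by auto
  show "(\<lambda>X. the_elem (\<phi> ` X)) \<in> ring_hom (A Quot I) C"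
  proof (rule ring_hom_memI)
    fix X assume "X \<in> carrier (A Quot I)"
    then obtain x where x: "x \<in> carrier A" "X = I +>\<^bsub>A\<^esub> x" using cq by blast
    show "the_elem (\<phi> ` X) \<in> carrier C" using x ev by simp
  next
    fix X Y assume "X \<in> carrier (A Quot I)" "Y \<in> carrier (A Quot I)"
    then obtain x y where x: "x \<in> carrier A" "X = I +>\<^bsub>A\<^esub> x" and y: "y \<in> carrier A" "Y = I +>\<^bsub>A\<^esub> y"
      using cq by blast
    have "X \<otimes>\<^bsub>A Quot I\<^esub> Y = I +>\<^bsub>A\<^esub> (x \<otimes>\<^bsub>A\<^esub> y)"
      using ring_hom_mult[OF pi x(1) y(1)] x y by simp
    thus "the_elem (\<phi> ` (X \<otimes>\<^bsub>A Quot I\<^esub> Y)) = the_elem (\<phi> ` X) \<otimes>\<^bsub>C\<^esub> the_elem (\<phi> ` Y)"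
      using ev x y by simp
    have "X \<oplus>\<^bsub>A Quot I\<^esub> Y = I +>\<^bsub>A\<^esub> (x \<oplus>\<^bsub>A\<^esub> y)"
      using ring_hom_add[OF pi x(1) y(1)] x y by simp
    thus "the_elem (\<phi> ` (X \<oplus>\<^bsub>A Quot I\<^esub> Y)) = the_elem (\<phi> ` X) \<oplus>\<^bsub>C\<^esub> the_elem (\<phi> ` Y)"
      using ev x y by simp
  next
    show "the_elem (\<phi> ` \<one>\<^bsub>A Quot I\<^esub>) = \<one>\<^bsub>C\<^esub>"
      using ev[of "\<one>\<^bsub>A\<^esub>"] by (simp add: FactRing_def)
  qed
qed

lemma fa_scal_add: "fa_scal (a + b) = (\<lambda>w. fa_scal a w + fa_scal b w)"
  by (auto simp: fa_scal_def)
lemma fa_scal_mult: "fa_scal (a * b) = fa_mul (fa_scal a) (fa_scal b)"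
  unfolding fa_scal_mul by (auto simp: fa_scal_def)
lemma fa_scal_zero: "fa_scal 0 = (\<lambda>w. 0)"
  by (auto simp: fa_scal_def)

lemma quot_elem:
  "X \<in> carrier (A Quot I) \<Longrightarrow> \<exists>x\<in>carrier A. X = I +>\<^bsub>A\<^esub> x"
  unfolding FactRing_def A_RCOSETS_def' by auto

lemma lift_exists:
  fixes R1 :: "('g1,'a::field) fa set" and R2 :: "('g2,'a) fa set"
    and g12 :: "'g1 \<Rightarrow> ('g2,'a) fa"
  assumes F: "subfield_set F"
    and R1: "R1 \<subseteq> fa_carr F" and R2: "R2 \<subseteq> fa_carr F"
    and g12c: "\<And>x. g12 x \<in> fa_carr F"
    and kill: "\<And>\<Phi> r. \<Phi> \<in> ring_hom (free_alg F) (free_alg F Quot genideal (free_alg F) R2) \<Longrightarrow>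
        (\<And>x. \<Phi> (fa_gen x) = genideal (free_alg F) R2 +>\<^bsub>free_alg F\<^esub> g12 x) \<Longrightarrow>
        (\<And>c. c \<in> F \<Longrightarrow> \<Phi> (fa_scal c) = genideal (free_alg F) R2 +>\<^bsub>free_alg F\<^esub> fa_scal c) \<Longrightarrow>
        r \<in> R1 \<Longrightarrow> \<Phi> r = \<zero>\<^bsub>free_alg F Quot genideal (free_alg F) R2\<^esub>"
  shows "\<exists>h. h \<in> ring_hom (free_alg F Quot genideal (free_alg F) R1) (free_alg F Quot genideal (free_alg F) R2)
     \<and> (\<forall>x. h (genideal (free_alg F) R1 +>\<^bsub>free_alg F\<^esub> fa_gen x) = genideal (free_alg F) R2 +>\<^bsub>free_alg F\<^esub> g12 x)
     \<and> (\<forall>c\<in>F. h (genideal (free_alg F) R1 +>\<^bsub>free_alg F\<^esub> fa_scal c) = genideal (free_alg F) R2 +>\<^bsub>free_alg F\<^esub> fa_scal c)"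
proof -
  let ?A1 = "free_alg F :: (('g1,'a) fa) ring" and ?A2 = "free_alg F :: (('g2,'a) fa) ring"
  let ?I1 = "genideal ?A1 R1" and ?I2 = "genideal ?A2 R2"
  let ?Q2 = "?A2 Quot ?I2"
  interpret A1: ring ?A1 by (rule ring_free_alg[OF F])
  interpret A2: ring ?A2 by (rule ring_free_alg[OF F])
  have I1: "ideal ?I1 ?A1" by (rule A1.genideal_ideal) (use R1 in simp)
  have I2: "ideal ?I2 ?A2" by (rule A2.genideal_ideal) (use R2 in simp)
  interpret Q2: ring ?Q2 by (rule ideal.quotient_is_ring[OF I2])
  have pi2: "(+>\<^bsub>?A2\<^esub>) ?I2 \<in> ring_hom ?A2 ?Q2" by (rule ideal.rcos_ring_hom[OF I2])
  interpret P2: ring_hom_ring ?A2 ?Q2 "(+>\<^bsub>?A2\<^esub>) ?I2" by (rule ideal.rcos_ring_hom_ring[OF I2])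
  have F1: "0 \<in> F" "1 \<in> F" and Fadd: "\<And>a b. a \<in> F \<Longrightarrow> b \<in> F \<Longrightarrow> a + b \<in> F"
    and Fmul: "\<And>a b. a \<in> F \<Longrightarrow> b \<in> F \<Longrightarrow> a * b \<in> F"
    using F by (auto simp: subfield_set_def)
  interpret E: fa_eval ?Q2 F "\<lambda>c. ?I2 +>\<^bsub>?A2\<^esub> fa_scal c" "\<lambda>x. ?I2 +>\<^bsub>?A2\<^esub> g12 x"
  proof
    show "subfield_set F" by (rule F)
    show "\<And>c. c \<in> F \<Longrightarrow> ?I2 +>\<^bsub>?A2\<^esub> fa_scal c \<in> carrier ?Q2"
    proof -
      fix c assume "c \<in> F"
      thus "?I2 +>\<^bsub>?A2\<^esub> fa_scal c \<in> carrier ?Q2"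
        using P2.hom_closed fa_scal_carr[OF F, of c] free_alg_simps(1) by metis
    qed
    show "\<And>a b. a \<in> F \<Longrightarrow> b \<in> F \<Longrightarrow> ?I2 +>\<^bsub>?A2\<^esub> fa_scal (a + b) =
        (?I2 +>\<^bsub>?A2\<^esub> fa_scal a) \<oplus>\<^bsub>?Q2\<^esub> (?I2 +>\<^bsub>?A2\<^esub> fa_scal b)"
    proof -
      fix a b assume ab: "a \<in> F" "b \<in> F"
      have ca: "fa_scal a \<in> carrier ?A2" and cb: "fa_scal b \<in> carrier ?A2"
        using fa_scal_carr[OF F] ab by auto
      show "?I2 +>\<^bsub>?A2\<^esub> fa_scal (a + b) =
        (?I2 +>\<^bsub>?A2\<^esub> fa_scal a) \<oplus>\<^bsub>?Q2\<^esub> (?I2 +>\<^bsub>?A2\<^esub> fa_scal b)"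
        using P2.hom_add[OF ca cb] by (simp add: fa_scal_add)
    qed
    show "\<And>a b. a \<in> F \<Longrightarrow> b \<in> F \<Longrightarrow> ?I2 +>\<^bsub>?A2\<^esub> fa_scal (a * b) =
        (?I2 +>\<^bsub>?A2\<^esub> fa_scal a) \<otimes>\<^bsub>?Q2\<^esub> (?I2 +>\<^bsub>?A2\<^esub> fa_scal b)"
    proof -
      fix a b assume ab: "a \<in> F" "b \<in> F"
      have ca: "fa_scal a \<in> carrier ?A2" and cb: "fa_scal b \<in> carrier ?A2"
        using fa_scal_carr[OF F] ab by auto
      show "?I2 +>\<^bsub>?A2\<^esub> fa_scal (a * b) =
        (?I2 +>\<^bsub>?A2\<^esub> fa_scal a) \<otimes>\<^bsub>?Q2\<^esub> (?I2 +>\<^bsub>?A2\<^esub> fa_scal b)"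
        using P2.hom_mult[OF ca cb] by (simp add: fa_scal_mult)
    qed
    show "?I2 +>\<^bsub>?A2\<^esub> fa_scal 1 = \<one>\<^bsub>?Q2\<^esub>"
      using P2.hom_one by simp
    show "?I2 +>\<^bsub>?A2\<^esub> fa_scal 0 = \<zero>\<^bsub>?Q2\<^esub>"
      using P2.hom_zero by (simp add: fa_scal_zero)
    show "\<And>x. ?I2 +>\<^bsub>?A2\<^esub> g12 x \<in> carrier ?Q2"
      using g12c P2.hom_closed by simp
    fix c X assume c: "c \<in> F" and X: "X \<in> carrier ?Q2"
    then obtain x where x: "x \<in> carrier ?A2" "X = ?I2 +>\<^bsub>?A2\<^esub> x" using quot_elem by blast
    have sc: "fa_scal c \<in> carrier ?A2" using fa_scal_carr[OF F c] by simp
    have "fa_scal c \<otimes>\<^bsub>?A2\<^esub> x = x \<otimes>\<^bsub>?A2\<^esub> fa_scal c"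
      by (simp add: fa_scal_mul fa_mul_scal mult.commute)
    thus "(?I2 +>\<^bsub>?A2\<^esub> fa_scal c) \<otimes>\<^bsub>?Q2\<^esub> X = X \<otimes>\<^bsub>?Q2\<^esub> (?I2 +>\<^bsub>?A2\<^esub> fa_scal c)"
      using P2.hom_mult[OF sc x(1)] P2.hom_mult[OF x(1) sc] x(2) by simp
  qed
  have hom: "E.ev \<in> ring_hom ?A1 ?Q2" by (rule E.ev_hom)
  interpret H: ring_hom_ring ?A1 ?Q2 E.ev by (rule ring_hom_ringI2[OF A1.ring_axioms Q2.ring_axioms hom])
  have gen: "\<And>x. E.ev (fa_gen x) = ?I2 +>\<^bsub>?A2\<^esub> g12 x" by (rule E.ev_gen)
  have scal: "\<And>c. c \<in> F \<Longrightarrow> E.ev (fa_scal c) = ?I2 +>\<^bsub>?A2\<^esub> fa_scal c" by (rule E.ev_scal)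
  have "R1 \<subseteq> a_kernel ?A1 ?Q2 E.ev"
    using kill[OF hom gen scal] R1 unfolding a_kernel_def' by auto
  hence "?I1 \<subseteq> a_kernel ?A1 ?Q2 E.ev"
    by (rule A1.genideal_minimal[OF H.kernel_is_ideal])
  hence killI: "\<forall>i\<in>?I1. E.ev i = \<zero>\<^bsub>?Q2\<^esub>"
    unfolding a_kernel_def' by auto
  note L = quot_lift[OF A1.ring_axioms I1 Q2.ring_axioms hom killI]
  have cg: "fa_gen x \<in> carrier ?A1" for x using fa_gen_carr[OF F] by simp
  have cs: "c \<in> F \<Longrightarrow> fa_scal c \<in> carrier ?A1" for c using fa_scal_carr[OF F] by simp
  show ?thesis
    apply (rule exI[of _ "\<lambda>X. the_elem (E.ev ` X)"])
    apply (intro conjI allI ballI)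
    apply (rule L(1))
    apply (rule trans[OF L(2)[OF cg] gen])
    apply (rule trans[OF L(2)[OF cs] scal], assumption+)
    done
qed

lemma roundtrip:
  fixes R1 :: "('g1,'a::field) fa set" and R2 :: "('g2,'a) fa set"
    and g12 :: "'g1 \<Rightarrow> ('g2,'a) fa" and g21 :: "'g2 \<Rightarrow> ('g1,'a) fa"
  assumes F: "subfield_set F"
    and R1: "R1 \<subseteq> fa_carr F" and R2: "R2 \<subseteq> fa_carr F"
    and g12c: "\<And>x. g12 x \<in> fa_carr F"
    and h12: "h12 \<in> ring_hom (free_alg F Quot genideal (free_alg F) R1) (free_alg F Quot genideal (free_alg F) R2)"
    and h12g: "\<And>x. h12 (genideal (free_alg F) R1 +>\<^bsub>free_alg F\<^esub> fa_gen x) = genideal (free_alg F) R2 +>\<^bsub>free_alg F\<^esub> g12 x"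
    and h12s: "\<And>c. c \<in> F \<Longrightarrow> h12 (genideal (free_alg F) R1 +>\<^bsub>free_alg F\<^esub> fa_scal c) = genideal (free_alg F) R2 +>\<^bsub>free_alg F\<^esub> fa_scal c"
    and h21: "h21 \<in> ring_hom (free_alg F Quot genideal (free_alg F) R2) (free_alg F Quot genideal (free_alg F) R1)"
    and h21g: "\<And>y. h21 (genideal (free_alg F) R2 +>\<^bsub>free_alg F\<^esub> fa_gen y) = genideal (free_alg F) R1 +>\<^bsub>free_alg F\<^esub> g21 y"
    and h21s: "\<And>c. c \<in> F \<Longrightarrow> h21 (genideal (free_alg F) R2 +>\<^bsub>free_alg F\<^esub> fa_scal c) = genideal (free_alg F) R1 +>\<^bsub>free_alg F\<^esub> fa_scal c"
    and rt: "\<And>\<Psi> x. \<Psi> \<in> ring_hom (free_alg F) (free_alg F Quot genideal (free_alg F) R1) \<Longrightarrow>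
        (\<And>y. \<Psi> (fa_gen y) = genideal (free_alg F) R1 +>\<^bsub>free_alg F\<^esub> g21 y) \<Longrightarrow>
        (\<And>c. c \<in> F \<Longrightarrow> \<Psi> (fa_scal c) = genideal (free_alg F) R1 +>\<^bsub>free_alg F\<^esub> fa_scal c) \<Longrightarrow>
        \<Psi> (g12 x) = genideal (free_alg F) R1 +>\<^bsub>free_alg F\<^esub> fa_gen x"
  shows "\<And>X. X \<in> carrier (free_alg F Quot genideal (free_alg F) R1) \<Longrightarrow> h21 (h12 X) = X"
proof -
  let ?A1 = "free_alg F :: (('g1,'a) fa) ring" and ?A2 = "free_alg F :: (('g2,'a) fa) ring"
  let ?I1 = "genideal ?A1 R1" and ?I2 = "genideal ?A2 R2"
  let ?Q1 = "?A1 Quot ?I1" and ?Q2 = "?A2 Quot ?I2"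
  interpret A1: ring ?A1 by (rule ring_free_alg[OF F])
  interpret A2: ring ?A2 by (rule ring_free_alg[OF F])
  have I1: "ideal ?I1 ?A1" by (rule A1.genideal_ideal) (use R1 in simp)
  have I2: "ideal ?I2 ?A2" by (rule A2.genideal_ideal) (use R2 in simp)
  interpret Q1: ring ?Q1 by (rule ideal.quotient_is_ring[OF I1])
  have pi1: "(+>\<^bsub>?A1\<^esub>) ?I1 \<in> ring_hom ?A1 ?Q1" by (rule ideal.rcos_ring_hom[OF I1])
  have pi2: "(+>\<^bsub>?A2\<^esub>) ?I2 \<in> ring_hom ?A2 ?Q2" by (rule ideal.rcos_ring_hom[OF I2])
  have Psi: "h21 \<circ> (+>\<^bsub>?A2\<^esub>) ?I2 \<in> ring_hom ?A2 ?Q1" by (rule ring_hom_trans[OF pi2 h21])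
  have rtx: "h21 (?I2 +>\<^bsub>?A2\<^esub> g12 x) = ?I1 +>\<^bsub>?A1\<^esub> fa_gen x" for x
    using rt[OF Psi] h21g h21s by simp
  have chi: "h21 \<circ> (h12 \<circ> (+>\<^bsub>?A1\<^esub>) ?I1) \<in> ring_hom ?A1 ?Q1"
    by (rule ring_hom_trans[OF ring_hom_trans[OF pi1 h12] h21])
  have agree: "(h21 \<circ> (h12 \<circ> (+>\<^bsub>?A1\<^esub>) ?I1)) a = ?I1 +>\<^bsub>?A1\<^esub> a" if a: "a \<in> fa_carr F" for a
    by (rule hom_agree[OF F Q1.ring_axioms chi pi1 _ _ a]) (simp_all add: h12g rtx h12s h21s)
  fix X assume "X \<in> carrier ?Q1"
  then obtain x where x: "x \<in> carrier ?A1" "X = ?I1 +>\<^bsub>?A1\<^esub> x" using quot_elem by blast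
  show "h21 (h12 X) = X" using agree[of x] x by simp
qed

lemma gen_iso:
  fixes R1 :: "('g1,'a::field) fa set" and R2 :: "('g2,'a) fa set"
    and g12 :: "'g1 \<Rightarrow> ('g2,'a) fa" and g21 :: "'g2 \<Rightarrow> ('g1,'a) fa"
  assumes F: "subfield_set F"
    and R1: "R1 \<subseteq> fa_carr F" and R2: "R2 \<subseteq> fa_carr F"
    and g12c: "\<And>x. g12 x \<in> fa_carr F" and g21c: "\<And>x. g21 x \<in> fa_carr F"
    and kill12: "\<And>\<Phi> r. \<Phi> \<in> ring_hom (free_alg F) (free_alg F Quot genideal (free_alg F) R2) \<Longrightarrow>
        (\<And>x. \<Phi> (fa_gen x) = genideal (free_alg F) R2 +>\<^bsub>free_alg F\<^esub> g12 x) \<Longrightarrow>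
        (\<And>c. c \<in> F \<Longrightarrow> \<Phi> (fa_scal c) = genideal (free_alg F) R2 +>\<^bsub>free_alg F\<^esub> fa_scal c) \<Longrightarrow>
        r \<in> R1 \<Longrightarrow> \<Phi> r = \<zero>\<^bsub>free_alg F Quot genideal (free_alg F) R2\<^esub>"
    and kill21: "\<And>\<Phi> r. \<Phi> \<in> ring_hom (free_alg F) (free_alg F Quot genideal (free_alg F) R1) \<Longrightarrow>
        (\<And>x. \<Phi> (fa_gen x) = genideal (free_alg F) R1 +>\<^bsub>free_alg F\<^esub> g21 x) \<Longrightarrow>
        (\<And>c. c \<in> F \<Longrightarrow> \<Phi> (fa_scal c) = genideal (free_alg F) R1 +>\<^bsub>free_alg F\<^esub> fa_scal c) \<Longrightarrow>
        r \<in> R2 \<Longrightarrow> \<Phi> r = \<zero>\<^bsub>free_alg F Quot genideal (free_alg F) R1\<^esub>"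
    and rt1: "\<And>\<Psi> x. \<Psi> \<in> ring_hom (free_alg F) (free_alg F Quot genideal (free_alg F) R1) \<Longrightarrow>
        (\<And>y. \<Psi> (fa_gen y) = genideal (free_alg F) R1 +>\<^bsub>free_alg F\<^esub> g21 y) \<Longrightarrow>
        (\<And>c. c \<in> F \<Longrightarrow> \<Psi> (fa_scal c) = genideal (free_alg F) R1 +>\<^bsub>free_alg F\<^esub> fa_scal c) \<Longrightarrow>
        \<Psi> (g12 x) = genideal (free_alg F) R1 +>\<^bsub>free_alg F\<^esub> fa_gen x"
    and rt2: "\<And>\<Psi> x. \<Psi> \<in> ring_hom (free_alg F) (free_alg F Quot genideal (free_alg F) R2) \<Longrightarrow>
        (\<And>y. \<Psi> (fa_gen y) = genideal (free_alg F) R2 +>\<^bsub>free_alg F\<^esub> g12 y) \<Longrightarrow>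
        (\<And>c. c \<in> F \<Longrightarrow> \<Psi> (fa_scal c) = genideal (free_alg F) R2 +>\<^bsub>free_alg F\<^esub> fa_scal c) \<Longrightarrow>
        \<Psi> (g21 x) = genideal (free_alg F) R2 +>\<^bsub>free_alg F\<^esub> fa_gen x"
  shows "F_alg_iso F (free_alg F Quot genideal (free_alg F) R1) (free_alg F Quot genideal (free_alg F) R2)
          (\<lambda>c. genideal (free_alg F) R1 +>\<^bsub>free_alg F\<^esub> fa_scal c)
          (\<lambda>c. genideal (free_alg F) R2 +>\<^bsub>free_alg F\<^esub> fa_scal c)"
proof -
  obtain h12 where h12: "h12 \<in> ring_hom (free_alg F Quot genideal (free_alg F) R1) (free_alg F Quot genideal (free_alg F) R2)"
     "\<forall>x. h12 (genideal (free_alg F) R1 +>\<^bsub>free_alg F\<^esub> fa_gen x) = genideal (free_alg F) R2 +>\<^bsub>free_alg F\<^esub> g12 x"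
     "\<forall>c\<in>F. h12 (genideal (free_alg F) R1 +>\<^bsub>free_alg F\<^esub> fa_scal c) = genideal (free_alg F) R2 +>\<^bsub>free_alg F\<^esub> fa_scal c"
  proof -
    have "\<exists>h. h \<in> ring_hom (free_alg F Quot genideal (free_alg F) R1) (free_alg F Quot genideal (free_alg F) R2)
     \<and> (\<forall>x. h (genideal (free_alg F) R1 +>\<^bsub>free_alg F\<^esub> fa_gen x) = genideal (free_alg F) R2 +>\<^bsub>free_alg F\<^esub> g12 x)
     \<and> (\<forall>c\<in>F. h (genideal (free_alg F) R1 +>\<^bsub>free_alg F\<^esub> fa_scal c) = genideal (free_alg F) R2 +>\<^bsub>free_alg F\<^esub> fa_scal c)"
      by (rule lift_exists[OF F R1 R2 g12c], rule kill12; assumption)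
    thus ?thesis using that by blast
  qed
  obtain h21 where h21: "h21 \<in> ring_hom (free_alg F Quot genideal (free_alg F) R2) (free_alg F Quot genideal (free_alg F) R1)"
     "\<forall>x. h21 (genideal (free_alg F) R2 +>\<^bsub>free_alg F\<^esub> fa_gen x) = genideal (free_alg F) R1 +>\<^bsub>free_alg F\<^esub> g21 x"
     "\<forall>c\<in>F. h21 (genideal (free_alg F) R2 +>\<^bsub>free_alg F\<^esub> fa_scal c) = genideal (free_alg F) R1 +>\<^bsub>free_alg F\<^esub> fa_scal c"
  proof -
    have "\<exists>h. h \<in> ring_hom (free_alg F Quot genideal (free_alg F) R2) (free_alg F Quot genideal (free_alg F) R1)
     \<and> (\<forall>x. h (genideal (free_alg F) R2 +>\<^bsub>free_alg F\<^esub> fa_gen x) = genideal (free_alg F) R1 +>\<^bsub>free_alg F\<^esub> g21 x)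
     \<and> (\<forall>c\<in>F. h (genideal (free_alg F) R2 +>\<^bsub>free_alg F\<^esub> fa_scal c) = genideal (free_alg F) R1 +>\<^bsub>free_alg F\<^esub> fa_scal c)"
      by (rule lift_exists[OF F R2 R1 g21c], rule kill21; assumption)
    thus ?thesis using that by blast
  qed
  have r1: "\<And>X. X \<in> carrier (free_alg F Quot genideal (free_alg F) R1) \<Longrightarrow> h21 (h12 X) = X"
    apply (rule roundtrip[OF F R1 R2 g12c h12(1) _ _ h21(1)])
    using h12 h21 apply auto[4]
     apply (rule rt1; assumption)
    apply assumption
    done
  have r2: "\<And>X. X \<in> carrier (free_alg F Quot genideal (free_alg F) R2) \<Longrightarrow> h12 (h21 X) = X"
    apply (rule roundtrip[OF F R2 R1 g21c h21(1) _ _ h12(1)])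
    using h12 h21 apply auto[4]
     apply (rule rt2; assumption)
    apply assumption
    done
  have "bij_betw h12 (carrier (free_alg F Quot genideal (free_alg F) R1)) (carrier (free_alg F Quot genideal (free_alg F) R2))"
    by (rule bij_betw_byWitness[where f'=h21]) (use r1 r2 ring_hom_closed[OF h12(1)] ring_hom_closed[OF h21(1)] in auto)
  thus ?thesis unfolding F_alg_iso_def ring_iso_def using h12 by auto
qed

lemma (in ring) minus_zero_iff:
  assumes "a \<in> carrier R" "b \<in> carrier R"
  shows "a \<ominus> b = \<zero> \<longleftrightarrow> a = b"
  using assms by (metis a_minus_def add.inv_closed minus_equality r_neg)

lemma fa_neg:
  assumes F: "subfield_set F" and g: "g \<in> fa_carr F"
  shows "\<ominus>\<^bsub>free_alg F\<^esub> g = (\<lambda>w. - g w)"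
proof -
  interpret A: ring "free_alg F" by (rule ring_free_alg[OF F])
  show ?thesis
    by (rule A.minus_equality) (use g fa_neg_carr[OF F g] in auto)
qed

lemma fa_diff_minus:
  assumes F: "subfield_set F" and f: "f \<in> fa_carr F" and g: "g \<in> fa_carr F"
  shows "fa_diff f g = f \<ominus>\<^bsub>free_alg F\<^esub> g"
  using fa_neg[OF F g] by (simp add: fa_diff_def a_minus_def)

lemma fa_diff_carr:
  assumes F: "subfield_set F" and f: "f \<in> fa_carr F" and g: "g \<in> fa_carr F"
  shows "fa_diff f g \<in> fa_carr F"
proof -
  interpret A: ring "free_alg F" by (rule ring_free_alg[OF F])
  show ?thesis using fa_diff_minus[OF F f g] f g A.minus_closed[of f g] by simp
qed

definition sp_eqs :: "('c, 'm) ring_scheme \<Rightarrow> 'a::field set \<Rightarrow> (nat \<Rightarrow> 'a set) \<Rightarrow> arrow set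
   \<Rightarrow> (arrow \<Rightarrow> 'a \<Rightarrow> 'a) \<Rightarrow> ('a sgen \<Rightarrow> 'c) \<Rightarrow> ('a \<Rightarrow> 'c) \<Rightarrow> bool" where
  "sp_eqs C F Fld As tw e sc \<longleftrightarrow>
    (\<forall>i l. (i \<notin> {1,2,3} \<or> l \<notin> Fld i) \<longrightarrow> e (V i l) = \<zero>\<^bsub>C\<^esub>) \<and>
    (\<forall>a. a \<notin> As \<longrightarrow> e (Arr a) = \<zero>\<^bsub>C\<^esub>) \<and>
    (\<forall>i\<in>{1,2,3}. \<forall>l\<in>Fld i. \<forall>m\<in>Fld i. e (V i l) \<oplus>\<^bsub>C\<^esub> e (V i m) = e (V i (l + m))) \<and>
    (\<forall>i\<in>{1,2,3}. \<forall>l\<in>Fld i. \<forall>m\<in>Fld i. e (V i l) \<otimes>\<^bsub>C\<^esub> e (V i m) = e (V i (l * m))) \<and>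
    (\<forall>i\<in>{1,2,3}. \<forall>j\<in>{1,2,3}. i \<noteq> j \<longrightarrow> (\<forall>l\<in>Fld i. \<forall>m\<in>Fld j. e (V i l) \<otimes>\<^bsub>C\<^esub> e (V j m) = \<zero>\<^bsub>C\<^esub>)) \<and>
    e (V 1 1) \<oplus>\<^bsub>C\<^esub> (e (V 2 1) \<oplus>\<^bsub>C\<^esub> e (V 3 1)) = \<one>\<^bsub>C\<^esub> \<and>
    (\<forall>c\<in>F. \<forall>i\<in>{1,2,3}. \<forall>l\<in>Fld i. sc c \<otimes>\<^bsub>C\<^esub> e (V i l) = e (V i (c * l))) \<and>
    (\<forall>a\<in>As. e (Arr a) = e (V (qhd a) 1) \<otimes>\<^bsub>C\<^esub> e (Arr a) \<otimes>\<^bsub>C\<^esub> e (V (qtl a) 1)) \<and>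
    (\<forall>a\<in>As. \<forall>z\<in>Fld (qhd a) \<inter> Fld (qtl a).
        e (Arr a) \<otimes>\<^bsub>C\<^esub> e (V (qtl a) z) = e (V (qhd a) (tw a z)) \<otimes>\<^bsub>C\<^esub> e (Arr a))"

definition zero_eqs :: "('c, 'm) ring_scheme \<Rightarrow> ('a sgen \<Rightarrow> 'c) \<Rightarrow> bool" where
  "zero_eqs C e \<longleftrightarrow> e (Arr Alpha) \<otimes>\<^bsub>C\<^esub> e (Arr Beta) = \<zero>\<^bsub>C\<^esub> \<and>
     e (Arr Beta) \<otimes>\<^bsub>C\<^esub> e (Arr Gamma) = \<zero>\<^bsub>C\<^esub> \<and> e (Arr Gamma) \<otimes>\<^bsub>C\<^esub> e (Arr Alpha) = \<zero>\<^bsub>C\<^esub>"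

lemma sum123: "(\<lambda>w. \<Sum>i\<in>{1,2,3::nat}. f i w) = (\<lambda>w. f 1 w + (f 2 w + f 3 w))"
  by auto

lemma species_rels_carr:
  assumes F: "subfield_set F"
  shows "species_rels F {1,2,3} Fld As hh tt tw \<subseteq> fa_carr F"
proof -
  have g: "\<And>x. fa_gen x \<in> fa_carr F" by (rule fa_gen_carr[OF F])
  have s: "\<And>c. c \<in> F \<Longrightarrow> fa_scal c \<in> fa_carr F" by (rule fa_scal_carr[OF F])
  have m: "\<And>f g. f \<in> fa_carr F \<Longrightarrow> g \<in> fa_carr F \<Longrightarrow> fa_mul f g \<in> fa_carr F" by (rule fa_mul_carr[OF F])
  have a: "\<And>f g. f \<in> fa_carr F \<Longrightarrow> g \<in> fa_carr F \<Longrightarrow> (\<lambda>w. f w + g w) \<in> fa_carr F" by (rule fa_add_carr[OF F])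
  have d: "\<And>f g. f \<in> fa_carr F \<Longrightarrow> g \<in> fa_carr F \<Longrightarrow> fa_diff f g \<in> fa_carr F" by (rule fa_diff_carr[OF F])
  have F1: "1 \<in> F" using F by (simp add: subfield_set_def)
  show ?thesis
    unfolding species_rels_def sum123
    by (auto intro!: g s m a d F1)
qed

lemma zero_rels_carr: "subfield_set F \<Longrightarrow> zero_rels \<subseteq> fa_carr F"
  unfolding zero_rels_def by (auto intro!: fa_gen_carr fa_mul_carr)

lemma loop_rel_carr: "subfield_set F \<Longrightarrow> loop_rel q \<in> fa_carr F"
  unfolding loop_rel_def by (auto intro!: fa_gen_carr fa_mul_carr fa_diff_carr)

lemma sr:
  "\<And>i l. i \<notin> Vs \<or> l \<notin> Fld i \<Longrightarrow> fa_gen (V i l) \<in> species_rels F Vs Fld As hh tt tw"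
  "\<And>a. a \<notin> As \<Longrightarrow> fa_gen (Arr a) \<in> species_rels F Vs Fld As hh tt tw"
  "\<And>i l m. i \<in> Vs \<Longrightarrow> l \<in> Fld i \<Longrightarrow> m \<in> Fld i \<Longrightarrow>
     fa_diff (\<lambda>w. fa_gen (V i l) w + fa_gen (V i m) w) (fa_gen (V i (l + m))) \<in> species_rels F Vs Fld As hh tt tw"
  "\<And>i l m. i \<in> Vs \<Longrightarrow> l \<in> Fld i \<Longrightarrow> m \<in> Fld i \<Longrightarrow>
     fa_diff (fa_mul (fa_gen (V i l)) (fa_gen (V i m))) (fa_gen (V i (l * m))) \<in> species_rels F Vs Fld As hh tt tw"
  "\<And>i j l m. i \<in> Vs \<Longrightarrow> j \<in> Vs \<Longrightarrow> i \<noteq> j \<Longrightarrow> l \<in> Fld i \<Longrightarrow> m \<in> Fld j \<Longrightarrow>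
     fa_mul (fa_gen (V i l)) (fa_gen (V j m)) \<in> species_rels F Vs Fld As hh tt tw"
  "fa_diff (\<lambda>w. \<Sum>i\<in>Vs. fa_gen (V i 1) w) (fa_scal 1) \<in> species_rels F Vs Fld As hh tt tw"
  "\<And>c i l. c \<in> F \<Longrightarrow> i \<in> Vs \<Longrightarrow> l \<in> Fld i \<Longrightarrow>
     fa_diff (fa_mul (fa_scal c) (fa_gen (V i l))) (fa_gen (V i (c * l))) \<in> species_rels F Vs Fld As hh tt tw"
  "\<And>a. a \<in> As \<Longrightarrow> fa_diff (fa_gen (Arr a))
        (fa_mul (fa_mul (fa_gen (V (hh a) 1)) (fa_gen (Arr a))) (fa_gen (V (tt a) 1))) \<in> species_rels F Vs Fld As hh tt tw"
  "\<And>a z. a \<in> As \<Longrightarrow> z \<in> Fld (hh a) \<Longrightarrow> z \<in> Fld (tt a) \<Longrightarrow>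
     fa_diff (fa_mul (fa_gen (Arr a)) (fa_gen (V (tt a) z)))
              (fa_mul (fa_gen (V (hh a) (tw a z))) (fa_gen (Arr a))) \<in> species_rels F Vs Fld As hh tt tw"
  unfolding species_rels_def by blast+

locale fa_rh =
  fixes F :: "'a::field set" and C :: "('c, 'm) ring_scheme" (structure) and \<rho> :: "('a sgen,'a) fa \<Rightarrow> 'c"
  assumes F: "subfield_set F" and C: "ring C" and hom: "\<rho> \<in> ring_hom (free_alg F) C"
begin

interpretation A: ring "free_alg F" by (rule ring_free_alg[OF F])
interpretation C: ring C by (rule C)
interpretation H: ring_hom_ring "free_alg F" C \<rho> by (rule ring_hom_ringI2[OF A.ring_axioms C hom])

lemma \<rho>_carr: "f \<in> fa_carr F \<Longrightarrow> \<rho> f \<in> carrier C"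
  using H.hom_closed by simp
lemma \<rho>_add: "f \<in> fa_carr F \<Longrightarrow> g \<in> fa_carr F \<Longrightarrow> \<rho> (\<lambda>w. f w + g w) = \<rho> f \<oplus> \<rho> g"
  using H.hom_add[of f g] by simp
lemma \<rho>_mul: "f \<in> fa_carr F \<Longrightarrow> g \<in> fa_carr F \<Longrightarrow> \<rho> (fa_mul f g) = \<rho> f \<otimes> \<rho> g"
  using H.hom_mult[of f g] by simp
lemma \<rho>_diff: "f \<in> fa_carr F \<Longrightarrow> g \<in> fa_carr F \<Longrightarrow> \<rho> (fa_diff f g) = \<rho> f \<ominus> \<rho> g"
proof -
  assume f: "f \<in> fa_carr F" and g: "g \<in> fa_carr F"
  have f': "f \<in> carrier (free_alg F)" and g': "g \<in> carrier (free_alg F)" using f g by auto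
  have ng: "\<ominus>\<^bsub>free_alg F\<^esub> g \<in> carrier (free_alg F)" using A.add.inv_closed[OF g'] .
  have "\<rho> (f \<ominus>\<^bsub>free_alg F\<^esub> g) = \<rho> f \<oplus> \<rho> (\<ominus>\<^bsub>free_alg F\<^esub> g)"
    unfolding a_minus_def by (rule H.hom_add[OF f' ng])
  also have "\<dots> = \<rho> f \<ominus> \<rho> g" using g H.hom_a_inv[of g] by (simp add: a_minus_def)
  finally show ?thesis using fa_diff_minus[OF F f g] by simp
qed
lemma \<rho>_zero: "\<rho> (\<lambda>w. 0) = \<zero>"
  using H.hom_zero by simp
lemma \<rho>_one: "\<rho> (fa_scal 1) = \<one>"
  using H.hom_one by simp

lemmas cr = fa_gen_carr[OF F] fa_scal_carr[OF F] fa_mul_carr[OF F] fa_add_carr[OF F] fa_diff_carr[OF F]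

lemma diff0: "f \<in> fa_carr F \<Longrightarrow> g \<in> fa_carr F \<Longrightarrow> \<rho> (fa_diff f g) = \<zero> \<longleftrightarrow> \<rho> f = \<rho> g"
  by (simp add: \<rho>_diff C.minus_zero_iff \<rho>_carr)

lemma rels_eqs:
  assumes kill: "\<forall>r\<in>species_rels F {1,2,3} Fld As qhd qtl tw. \<rho> r = \<zero>"
  shows "sp_eqs C F Fld As tw (\<lambda>x. \<rho> (fa_gen x)) (\<lambda>c. \<rho> (fa_scal c))"
proof -
  have F1: "1 \<in> F" using F by (simp add: subfield_set_def)
  have k: "\<And>r. r \<in> species_rels F {1,2,3} Fld As qhd qtl tw \<Longrightarrow> \<rho> r = \<zero>" using kill by blast
  note kk = k[OF sr(1)] k[OF sr(2)] k[OF sr(3)] k[OF sr(4)] k[OF sr(5)] k[OF sr(6)] k[OF sr(7)] k[OF sr(8)] k[OF sr(9)]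
  show ?thesis
    unfolding sp_eqs_def
    apply (intro conjI)
    subgoal by (intro allI impI kk)
    subgoal by (intro allI impI kk)
    subgoal apply (intro ballI) apply (subst \<rho>_add[symmetric], (rule cr)+) apply (subst diff0[symmetric]) 
      apply (auto intro!: cr kk) done
    subgoal apply (intro ballI) apply (subst \<rho>_mul[symmetric], (rule cr)+) apply (subst diff0[symmetric]) 
      apply (auto intro!: cr kk) done
    subgoal apply (intro ballI impI) apply (subst \<rho>_mul[symmetric], (rule cr)+)
      apply (auto intro!: kk) done
    subgoal
    proof -
      have e: "(\<lambda>w. \<Sum>i\<in>{1,2,3::nat}. fa_gen (V i 1) w) =
        (\<lambda>w. fa_gen (V 1 1) w + (\<lambda>w. fa_gen (V 2 1) w + fa_gen (V 3 1) w) w)" by simp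
      have c23: "(\<lambda>w. fa_gen (V 2 1) w + fa_gen (V 3 1) w) \<in> fa_carr F" by (intro cr)
      have "\<rho> (\<lambda>w. \<Sum>i\<in>{1,2,3::nat}. fa_gen (V i 1) w) = \<rho> (fa_scal 1)"
        using kk(6) by (subst diff0[symmetric]) (auto intro!: cr F1 simp del: fa_diff_def)
      thus ?thesis unfolding e \<rho>_one by (simp add: \<rho>_add cr c23)
    qed
    subgoal apply (intro ballI) apply (subst \<rho>_mul[symmetric], (rule cr)+, assumption, rule cr) apply (subst diff0[symmetric]) 
      apply (auto intro!: cr kk) done
    subgoal apply (intro ballI) apply (subst \<rho>_mul[symmetric], (rule cr)+)+ apply (subst diff0[symmetric]) 
      apply (auto intro!: cr kk) done
    subgoal apply (intro ballI) apply (subst \<rho>_mul[symmetric], (rule cr)+)+ apply (subst diff0[symmetric]) 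
      apply (auto intro!: cr kk) done
    done
qed


lemma eqs_rels:
  assumes eq: "sp_eqs C F Fld As tw (\<lambda>x. \<rho> (fa_gen x)) (\<lambda>c. \<rho> (fa_scal c))"
  shows "\<forall>r\<in>species_rels F {1,2,3} Fld As qhd qtl tw. \<rho> r = \<zero>"
proof
  fix r assume "r \<in> species_rels F {1,2,3} Fld As qhd qtl tw"
  have F1: "1 \<in> F" using F by (simp add: subfield_set_def)
  have c23: "(\<lambda>w. fa_gen (V 2 1) w + fa_gen (V 3 1) w) \<in> fa_carr F" by (intro cr)
  have e: "(\<lambda>w. \<Sum>i\<in>{1,2,3::nat}. fa_gen (V i 1) w) =
        (\<lambda>w. fa_gen (V 1 1) w + (\<lambda>w. fa_gen (V 2 1) w + fa_gen (V 3 1) w) w)" by simp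
  have s6: "\<rho> (fa_diff (\<lambda>w. \<Sum>i\<in>{1,2,3::nat}. fa_gen (V i 1) w) (fa_scal 1)) = \<zero>"
    apply (subst diff0)
    apply (simp add: e c23 cr)
     apply (simp add: cr F1)
    unfolding e \<rho>_one using eq by (simp add: \<rho>_add cr c23 sp_eqs_def)
  show "\<rho> r = \<zero>"
    using \<open>r \<in> _\<close> unfolding species_rels_def
    apply (elim UnE CollectE exE conjE)
    using eq s6 unfolding sp_eqs_def
    by (auto simp: diff0 cr \<rho>_add \<rho>_mul)
qed

lemma zero_eqs_rels: "zero_eqs C (\<lambda>x. \<rho> (fa_gen x)) \<Longrightarrow> \<forall>r\<in>zero_rels. \<rho> r = \<zero>"
  unfolding zero_eqs_def zero_rels_def by (auto simp: \<rho>_mul cr)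

lemma rels_zero_eqs: "\<forall>r\<in>zero_rels. \<rho> r = \<zero> \<Longrightarrow> zero_eqs C (\<lambda>x. \<rho> (fa_gen x))"
  unfolding zero_eqs_def zero_rels_def by (auto simp: \<rho>_mul cr)

lemma loop_iff: "\<rho> (loop_rel q) = \<zero> \<longleftrightarrow> \<rho> (fa_gen (Arr S1)) \<otimes> \<rho> (fa_gen (Arr S1)) = \<rho> (fa_gen (V 1 q))"
  unfolding loop_rel_def by (simp add: diff0 cr \<rho>_mul)

end

definition dec :: "'a::field set \<Rightarrow> 'a \<Rightarrow> 'a \<Rightarrow> 'a \<times> 'a" where
  "dec K t x = (SOME p. fst p \<in> K \<and> snd p \<in> K \<and> x = fst p + snd p * t)"

locale kt =
  fixes K :: "'a::field set" and t :: 'a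
  assumes K: "subfield_set K" and tK: "t \<notin> K" and span: "\<forall>x. \<exists>a\<in>K. \<exists>b\<in>K. x = a + b * t"
begin

lemma K0: "0 \<in> K" and K1: "1 \<in> K"
  and Kadd: "a \<in> K \<Longrightarrow> b \<in> K \<Longrightarrow> a + b \<in> K"
  and Kdiff: "a \<in> K \<Longrightarrow> b \<in> K \<Longrightarrow> a - b \<in> K"
  and Kmul: "a \<in> K \<Longrightarrow> b \<in> K \<Longrightarrow> a * b \<in> K"
  and Kinv: "a \<in> K \<Longrightarrow> inverse a \<in> K"
  using K by (auto simp: subfield_set_def)

lemma dec_prop: "fst (dec K t x) \<in> K \<and> snd (dec K t x) \<in> K \<and> x = fst (dec K t x) + snd (dec K t x) * t"
proof -
  obtain a b where "a \<in> K" "b \<in> K" "x = a + b * t" using span by blast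
  hence "\<exists>p. fst p \<in> K \<and> snd p \<in> K \<and> x = fst p + snd p * t" by (intro exI[of _ "(a,b)"]) auto
  thus ?thesis unfolding dec_def by (rule someI_ex)
qed

lemma uniq:
  assumes "a \<in> K" "b \<in> K" "a' \<in> K" "b' \<in> K" "a + b * t = a' + b' * t"
  shows "a = a' \<and> b = b'"
proof (cases "b = b'")
  case True thus ?thesis using assms by simp
next
  case False
  have "(b - b') * t = a' - a" using assms(5) by (simp add: algebra_simps)
  hence "t = (a' - a) * inverse (b - b')" using False by (simp add: field_simps)
  moreover have "(a' - a) * inverse (b - b') \<in> K" using assms by (intro Kmul Kdiff Kinv)
  ultimately show ?thesis using tK by simp
qed

lemma dec_uniq: "a \<in> K \<Longrightarrow> b \<in> K \<Longrightarrow> dec K t (a + b * t) = (a, b)"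
  using uniq[of a b "fst (dec K t (a + b * t))" "snd (dec K t (a + b * t))"] dec_prop[of "a + b * t"]
  by (metis prod.collapse)

lemma dec_K: "k \<in> K \<Longrightarrow> dec K t k = (k, 0)"
  using dec_uniq[of k 0] K0 by simp

lemma dec_t: "dec K t t = (0, 1)"
  using dec_uniq[of 0 1] K0 K1 by simp

abbreviation "da x \<equiv> fst (dec K t x)"
abbreviation "db x \<equiv> snd (dec K t x)"

lemma da_K: "da x \<in> K" and db_K: "db x \<in> K" and da_db: "x = da x + db x * t"
  using dec_prop by auto

lemma dec_add: "da (x + y) = da x + da y" "db (x + y) = db x + db y"
proof -
  have "x + y = (da x + da y) + (db x + db y) * t"
    by (subst da_db[of x], subst da_db[of y]) (simp add: algebra_simps)
  hence "dec K t (x + y) = (da x + da y, db x + db y)"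
    by (metis dec_uniq Kadd da_K db_K)
  thus "da (x + y) = da x + da y" "db (x + y) = db x + db y" by auto
qed

lemma dec_mul:
  assumes q: "t * t \<in> K"
  shows "da (x * y) = da x * da y + db x * db y * (t * t)"
        "db (x * y) = da x * db y + db x * da y"
proof -
  have "x * y = (da x * da y + db x * db y * (t * t)) + (da x * db y + db x * da y) * t"
    by (subst da_db[of x], subst da_db[of y]) (simp add: algebra_simps)
  moreover have "da x * da y + db x * db y * (t * t) \<in> K" "da x * db y + db x * da y \<in> K"
    using q by (simp_all add: Kadd Kmul da_K db_K)
  ultimately have "dec K t (x * y) = (da x * da y + db x * db y * (t * t), da x * db y + db x * da y)"
    by (metis dec_uniq)
  thus "da (x * y) = da x * da y + db x * db y * (t * t)" "db (x * y) = da x * db y + db x * da y" by auto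
qed

lemma dec_scal:
  assumes c: "c \<in> K"
  shows "da (c * x) = c * da x" "db (c * x) = c * db x"
proof -
  have "c * x = c * da x + c * db x * t"
    by (subst da_db[of x]) (simp add: algebra_simps)
  hence "dec K t (c * x) = (c * da x, c * db x)"
    by (metis dec_uniq Kmul da_K db_K c)
  thus "da (c * x) = c * da x" "db (c * x) = c * db x" by auto
qed

end

declare One_nat_def [simp del]

locale spq = C: ring C for C :: "('c, 'm) ring_scheme" (structure) +
  fixes F :: "'a::field set" and Fld :: "nat \<Rightarrow> 'a set" and As :: "arrow set"
    and tw :: "arrow \<Rightarrow> 'a \<Rightarrow> 'a" and e :: "'a sgen \<Rightarrow> 'c" and sc :: "'a \<Rightarrow> 'c"
  assumes eqs: "sp_eqs C F Fld As tw e sc"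
    and e_carr [simp]: "e x \<in> carrier C" and sc_carr: "c \<in> F \<Longrightarrow> sc c \<in> carrier C"
    and Fld0: "0 \<in> Fld i"
begin

lemmas E = eqs[unfolded sp_eqs_def]

lemma kill_V: "i \<notin> {1,2,3} \<or> l \<notin> Fld i \<Longrightarrow> e (V i l) = \<zero>"
  using E[THEN conjunct1] by blast
lemma kill_A: "a \<notin> As \<Longrightarrow> e (Arr a) = \<zero>"
  using E[THEN conjunct2, THEN conjunct1] by blast
lemma vadd: "i \<in> {1,2,3} \<Longrightarrow> l \<in> Fld i \<Longrightarrow> m \<in> Fld i \<Longrightarrow> e (V i l) \<oplus> e (V i m) = e (V i (l + m))"
  using E[THEN conjunct2, THEN conjunct2, THEN conjunct1] by blast
lemma vmul: "i \<in> {1,2,3} \<Longrightarrow> l \<in> Fld i \<Longrightarrow> m \<in> Fld i \<Longrightarrow> e (V i l) \<otimes> e (V i m) = e (V i (l * m))"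
  using E[THEN conjunct2, THEN conjunct2, THEN conjunct2, THEN conjunct1] by blast
lemma vorth: "i \<in> {1,2,3} \<Longrightarrow> j \<in> {1,2,3} \<Longrightarrow> i \<noteq> j \<Longrightarrow> l \<in> Fld i \<Longrightarrow> m \<in> Fld j \<Longrightarrow> e (V i l) \<otimes> e (V j m) = \<zero>"
  using E[THEN conjunct2, THEN conjunct2, THEN conjunct2, THEN conjunct2, THEN conjunct1] by blast
lemma vsum: "e (V 1 1) \<oplus> (e (V 2 1) \<oplus> e (V 3 1)) = \<one>"
  using E[THEN conjunct2, THEN conjunct2, THEN conjunct2, THEN conjunct2, THEN conjunct2, THEN conjunct1] by simp
lemma vscal: "c \<in> F \<Longrightarrow> i \<in> {1,2,3} \<Longrightarrow> l \<in> Fld i \<Longrightarrow> sc c \<otimes> e (V i l) = e (V i (c * l))"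
  using E[THEN conjunct2, THEN conjunct2, THEN conjunct2, THEN conjunct2, THEN conjunct2, THEN conjunct2, THEN conjunct1] by blast
lemma arr_e: "a \<in> As \<Longrightarrow> e (Arr a) = e (V (qhd a) 1) \<otimes> e (Arr a) \<otimes> e (V (qtl a) 1)"
  using E[THEN conjunct2, THEN conjunct2, THEN conjunct2, THEN conjunct2, THEN conjunct2, THEN conjunct2, THEN conjunct2, THEN conjunct1] by blast
lemma arr_tw: "a \<in> As \<Longrightarrow> z \<in> Fld (qhd a) \<Longrightarrow> z \<in> Fld (qtl a) \<Longrightarrow>
    e (Arr a) \<otimes> e (V (qtl a) z) = e (V (qhd a) (tw a z)) \<otimes> e (Arr a)"
  using E[THEN conjunct2, THEN conjunct2, THEN conjunct2, THEN conjunct2, THEN conjunct2, THEN conjunct2, THEN conjunct2, THEN conjunct2] by blast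

lemma v0: "e (V i 0) = \<zero>"
proof (cases "i \<in> {1,2,3}")
  case True
  have "e (V i 0) \<oplus> e (V i 0) = e (V i 0)" using vadd[OF True Fld0 Fld0] by simp
  thus ?thesis using C.add.l_cancel_one[of "e (V i 0)" "e (V i 0)"] by simp
next
  case False thus ?thesis using kill_V by blast
qed

end

lemma sp_eqs_cong:
  "(\<And>c. c \<in> F \<Longrightarrow> sc c = sc' c) \<Longrightarrow> sp_eqs C F Fld As tw e sc = sp_eqs C F Fld As tw e sc'"
  unfolding sp_eqs_def by simp

definition E12 :: "('c,'m) ring_scheme \<Rightarrow> 'a::field set \<Rightarrow> 'a \<Rightarrow> ('a sgen \<Rightarrow> 'c) \<Rightarrow> 'a sgen \<Rightarrow> 'c" where
  "E12 C K t e x = (case x of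
      V i l \<Rightarrow> if i \<in> {2,3} \<and> l \<in> K then e (V i l)
               else if i = 1 then e (V 1 (fst (dec K t l))) \<oplus>\<^bsub>C\<^esub> e (V 1 (snd (dec K t l))) \<otimes>\<^bsub>C\<^esub> e (Arr S1)
               else \<zero>\<^bsub>C\<^esub>
    | Arr a \<Rightarrow> if a = S1 then \<zero>\<^bsub>C\<^esub> else e (Arr a))"

definition E21 :: "('c,'m) ring_scheme \<Rightarrow> 'a::field set \<Rightarrow> 'a \<Rightarrow> ('a sgen \<Rightarrow> 'c) \<Rightarrow> 'a sgen \<Rightarrow> 'c" where
  "E21 C K t e x = (case x of
      V i l \<Rightarrow> if l \<in> K then e (V i l) else \<zero>\<^bsub>C\<^esub>
    | Arr a \<Rightarrow> if a = S1 then e (V 1 t) else e (Arr a))"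

locale lam2 = spq C F "\<lambda>_. K" "{Alpha, Beta, Gamma, S1}" tw e sc + kt K t
  for C :: "('c, 'm) ring_scheme" (structure) and F K t tw e sc +
  assumes FK: "F \<subseteq> K" and qK: "t * t \<in> K" and twS1: "tw S1 = id"
    and twK: "\<And>a z. z \<in> K \<Longrightarrow> tw a z \<in> K"
    and loop: "e (Arr S1) \<otimes> e (Arr S1) = e (V 1 (t * t))"
    and zero: "zero_eqs C e"
begin

abbreviation "s \<equiv> e (Arr S1)"
abbreviation "E1 \<equiv> E12 C K t e"


lemma s_comm: "z \<in> K \<Longrightarrow> s \<otimes> e (V 1 z) = e (V 1 z) \<otimes> s"
  using arr_tw[of S1 z] by (simp add: qhd_def qtl_def twS1)

lemma s_e: "s = e (V 1 1) \<otimes> s \<otimes> e (V 1 1)"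
  using arr_e[of S1] by (simp add: qhd_def qtl_def)

lemma E1_K: "i \<in> {1,2,3} \<Longrightarrow> k \<in> K \<Longrightarrow> E1 (V i k) = e (V i k)"
  by (auto simp: E12_def dec_K v0)

lemma E1_carr [simp]: "E1 x \<in> carrier C"
  by (auto simp: E12_def split: sgen.split)

lemma E1_1: "E1 (V 1 l) = e (V 1 (da l)) \<oplus> e (V 1 (db l)) \<otimes> s"
  by (simp add: E12_def)

lemma s_orth: "j \<in> {2,3} \<Longrightarrow> m \<in> K \<Longrightarrow> s \<otimes> e (V j m) = \<zero>"
proof -
  assume j: "j \<in> {2,3}" and m: "m \<in> K"
  have "s \<otimes> e (V j m) = (e (V 1 1) \<otimes> s) \<otimes> (e (V 1 1) \<otimes> e (V j m))"
    by (subst s_e) (simp add: C.m_assoc)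
  also have "e (V 1 1) \<otimes> e (V j m) = \<zero>" using vorth[of 1 j 1 m] j m K1 by auto
  finally show ?thesis by simp
qed

lemma orth_s: "j \<in> {2,3} \<Longrightarrow> m \<in> K \<Longrightarrow> e (V j m) \<otimes> s = \<zero>"
proof -
  assume j: "j \<in> {2,3}" and m: "m \<in> K"
  have "e (V j m) \<otimes> s = (e (V j m) \<otimes> e (V 1 1)) \<otimes> (s \<otimes> e (V 1 1))"
    by (subst s_e) (simp add: C.m_assoc)
  also have "e (V j m) \<otimes> e (V 1 1) = \<zero>" using vorth[of j 1 m 1] j m K1 by auto
  finally show ?thesis by simp
qed



lemma E1_add: "E1 (V 1 l) \<oplus> E1 (V 1 m) = E1 (V 1 (l + m))"
proof -
  have sw: "\<And>a b c d. a \<in> carrier C \<Longrightarrow> b \<in> carrier C \<Longrightarrow> c \<in> carrier C \<Longrightarrow> d \<in> carrier C \<Longrightarrow>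
     (a \<oplus> b) \<oplus> (c \<oplus> d) = (a \<oplus> c) \<oplus> (b \<oplus> d)"
    by (metis C.add.m_assoc C.add.m_lcomm C.add.m_closed)
  have "E1 (V 1 l) \<oplus> E1 (V 1 m) = (e (V 1 (da l)) \<oplus> e (V 1 (da m))) \<oplus> (e (V 1 (db l)) \<otimes> s \<oplus> e (V 1 (db m)) \<otimes> s)"
    unfolding E1_1 by (rule sw) simp_all
  also have "\<dots> = (e (V 1 (da l)) \<oplus> e (V 1 (da m))) \<oplus> (e (V 1 (db l)) \<oplus> e (V 1 (db m))) \<otimes> s"
    by (simp add: C.l_distr)
  also have "\<dots> = E1 (V 1 (l + m))"
    by (subst E1_1) (simp add: vadd da_K db_K dec_add)
  finally show ?thesis .
qed

lemma E1_mul: "E1 (V 1 l) \<otimes> E1 (V 1 m) = E1 (V 1 (l * m))"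
proof -
  let ?a = "da l" and ?b = "db l" and ?c = "da m" and ?d = "db m"
  have K4: "?a \<in> K" "?b \<in> K" "?c \<in> K" "?d \<in> K" by (simp_all add: da_K db_K)
  let ?X = "e (V 1 ?a)" and ?Y = "e (V 1 ?b)" and ?Z = "e (V 1 ?c)" and ?W = "e (V 1 ?d)"
  have sw: "\<And>a b c d. a \<in> carrier C \<Longrightarrow> b \<in> carrier C \<Longrightarrow> c \<in> carrier C \<Longrightarrow> d \<in> carrier C \<Longrightarrow>
     (a \<oplus> b) \<oplus> (c \<oplus> d) = (a \<oplus> d) \<oplus> (c \<oplus> b)"
    by (metis C.add.m_assoc C.add.m_lcomm C.add.m_closed C.add.m_comm)
  have "E1 (V 1 l) \<otimes> E1 (V 1 m) = (?X \<otimes> ?Z \<oplus> (?Y \<otimes> s) \<otimes> ?Z) \<oplus> (?X \<otimes> (?W \<otimes> s) \<oplus> (?Y \<otimes> s) \<otimes> (?W \<otimes> s))"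
    unfolding E1_1 by (simp add: C.l_distr C.r_distr)
  also have "?X \<otimes> (?W \<otimes> s) = e (V 1 (?a * ?d)) \<otimes> s"
    by (simp add: C.m_assoc[symmetric] vmul K4)
  also have "(?Y \<otimes> s) \<otimes> ?Z = e (V 1 (?b * ?c)) \<otimes> s"
  proof -
    have "(?Y \<otimes> s) \<otimes> ?Z = ?Y \<otimes> (s \<otimes> ?Z)" by (simp add: C.m_assoc)
    also have "\<dots> = ?Y \<otimes> (?Z \<otimes> s)" by (simp add: s_comm K4)
    also have "\<dots> = e (V 1 (?b * ?c)) \<otimes> s" by (simp add: C.m_assoc[symmetric] vmul K4)
    finally show ?thesis .
  qed
  also have "(?Y \<otimes> s) \<otimes> (?W \<otimes> s) = e (V 1 (?b * ?d * (t * t)))"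
  proof -
    have "(?Y \<otimes> s) \<otimes> (?W \<otimes> s) = ?Y \<otimes> ((s \<otimes> ?W) \<otimes> s)" by (simp add: C.m_assoc)
    also have "\<dots> = ?Y \<otimes> ((?W \<otimes> s) \<otimes> s)" by (simp add: s_comm K4)
    also have "\<dots> = (?Y \<otimes> ?W) \<otimes> (s \<otimes> s)" by (simp add: C.m_assoc)
    also have "\<dots> = e (V 1 (?b * ?d * (t * t)))" by (simp add: loop vmul K4 qK Kmul)
    finally show ?thesis .
  qed
  also have "(?X \<otimes> ?Z \<oplus> e (V 1 (?b * ?c)) \<otimes> s) \<oplus> (e (V 1 (?a * ?d)) \<otimes> s \<oplus> e (V 1 (?b * ?d * (t * t))))
      = (?X \<otimes> ?Z \<oplus> e (V 1 (?b * ?d * (t * t)))) \<oplus> (e (V 1 (?a * ?d)) \<otimes> s \<oplus> e (V 1 (?b * ?c)) \<otimes> s)"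
    by (rule sw) simp_all
  also have "\<dots> = (e (V 1 (?a * ?c)) \<oplus> e (V 1 (?b * ?d * (t * t)))) \<oplus> (e (V 1 (?a * ?d)) \<oplus> e (V 1 (?b * ?c))) \<otimes> s"
    by (simp add: C.l_distr vmul K4)
  also have "\<dots> = E1 (V 1 (l * m))"
    by (subst E1_1) (simp add: dec_mul[OF qK] vadd K4 qK Kmul Kadd)
  finally show ?thesis .
qed


lemma v11_s: "e (V 1 1) \<otimes> s = s"
proof -
  have "e (V 1 1) \<otimes> s = e (V 1 1) \<otimes> (e (V 1 1) \<otimes> s \<otimes> e (V 1 1))" by (subst s_e) simp
  also have "\<dots> = (e (V 1 1) \<otimes> e (V 1 1)) \<otimes> s \<otimes> e (V 1 1)" by (simp add: C.m_assoc)
  also have "\<dots> = s" using vmul[of 1 1 1] K1 s_e[symmetric] by simp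
  finally show ?thesis .
qed

lemma E1_t: "E1 (V 1 t) = s"
  by (simp add: E1_1 dec_t v0 v11_s)

lemma alg12:
  "sp_eqs C F (\<lambda>i. if i = 1 then UNIV else K) {Alpha, Beta, Gamma} tw E1 sc"
proof -
  have FK': "\<And>c. c \<in> F \<Longrightarrow> c \<in> K" using FK by blast
  have P5: "E1 (V i l) \<otimes> E1 (V j m) = \<zero>"
    if ij: "i \<in> {1,2,3}" "j \<in> {1,2,3}" "i \<noteq> j" and l: "l \<in> (if i = 1 then UNIV else K)"
      and m: "m \<in> (if j = 1 then UNIV else K)" for i j l m
  proof -
    consider "i = 1" "j \<in> {2,3}" | "i \<in> {2,3}" "j = 1" | "i \<in> {2,3}" "j \<in> {2,3}" using ij by auto
    thus ?thesis
    proof cases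
      case 1
      then have mK: "m \<in> K" using m by auto
      have j1: "j \<noteq> 1" "j \<in> {1,2,3}" using 1 by auto
      have z1: "e (V 1 (da l)) \<otimes> e (V j m) = \<zero>" using vorth[OF _ j1(2) j1(1)[symmetric], of "da l" m] da_K mK by simp
      have "E1 (V i l) \<otimes> E1 (V j m) = e (V 1 (da l)) \<otimes> e (V j m) \<oplus> e (V 1 (db l)) \<otimes> (s \<otimes> e (V j m))"
        using 1 mK by (simp add: E1_1 E1_K C.l_distr C.m_assoc)
      also have "\<dots> = \<zero>" using z1 1 mK s_orth by simp
      finally show ?thesis .
    next
      case 2
      then have lK: "l \<in> K" using l by auto
      have i1: "i \<noteq> 1" using 2 by auto
      hence z: "e (V i l) \<otimes> e (V 1 (da m)) = \<zero>" "e (V i l) \<otimes> e (V 1 (db m)) = \<zero>"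
        using 2 lK vorth[of i 1 l] da_K db_K by auto
      have "E1 (V i l) \<otimes> E1 (V j m) = e (V i l) \<otimes> e (V 1 (da m)) \<oplus> (e (V i l) \<otimes> e (V 1 (db m))) \<otimes> s"
        using 2 lK by (simp add: E1_1 E1_K C.r_distr C.m_assoc)
      also have "\<dots> = \<zero>" using z by simp
      finally show ?thesis .
    qed (use ij l m in \<open>auto simp: E1_K vorth\<close>)
  qed
  have P7: "sc c \<otimes> E1 (V i l) = E1 (V i (c * l))"
    if c: "c \<in> F" and i: "i \<in> {1,2,3}" and l: "l \<in> (if i = 1 then UNIV else K)" for c i l
  proof (cases "i = 1")
    case True
    have cK: "c \<in> K" using FK' c .
    have "sc c \<otimes> E1 (V i l) = (sc c \<otimes> e (V 1 (da l))) \<oplus> (sc c \<otimes> e (V 1 (db l))) \<otimes> s"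
      using True sc_carr[OF c] by (simp add: E1_1 C.r_distr C.m_assoc)
    also have "\<dots> = E1 (V 1 (c * l))"
      by (subst E1_1) (simp add: vscal c da_K db_K dec_scal[OF cK])
    finally show ?thesis using True by simp
  next
    case False
    then have "l \<in> K" "c * l \<in> K" using l FK' c Kmul by auto
    thus ?thesis using i c by (simp add: E1_K vscal)
  qed
  show ?thesis
    unfolding sp_eqs_def
  proof (intro conjI)
    show "\<forall>i l. i \<notin> {1, 2, 3} \<or> l \<notin> (if i = 1 then UNIV else K) \<longrightarrow> E1 (V i l) = \<zero>"
      by (auto simp: E12_def)
    show "\<forall>a. a \<notin> {Alpha, Beta, Gamma} \<longrightarrow> E1 (Arr a) = \<zero>"
      by (intro allI, case_tac a) (auto simp: E12_def)
    show "\<forall>i\<in>{1, 2, 3}. \<forall>l\<in>if i = 1 then UNIV else K. \<forall>m\<in>if i = 1 then UNIV else K. E1 (V i l) \<oplus> E1 (V i m) = E1 (V i (l + m))"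
      by (auto simp: E1_add E1_K vadd Kadd)
    show "\<forall>i\<in>{1, 2, 3}. \<forall>l\<in>if i = 1 then UNIV else K. \<forall>m\<in>if i = 1 then UNIV else K. E1 (V i l) \<otimes> E1 (V i m) = E1 (V i (l * m))"
      by (auto simp: E1_mul E1_K vmul Kmul)
    show "\<forall>i\<in>{1, 2, 3}. \<forall>j\<in>{1, 2, 3}. i \<noteq> j \<longrightarrow> (\<forall>l\<in>if i = 1 then UNIV else K. \<forall>m\<in>if j = 1 then UNIV else K. E1 (V i l) \<otimes> E1 (V j m) = \<zero>)"
      using P5 by blast
    show "E1 (V 1 1) \<oplus> (E1 (V 2 1) \<oplus> E1 (V 3 1)) = \<one>"
      using vsum K1 by (simp add: E1_K)
    show "\<forall>c\<in>F. \<forall>i\<in>{1, 2, 3}. \<forall>l\<in>if i = 1 then UNIV else K. sc c \<otimes> E1 (V i l) = E1 (V i (c * l))"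
      using P7 by blast
    show "\<forall>a\<in>{Alpha, Beta, Gamma}. E1 (Arr a) = E1 (V (qhd a) 1) \<otimes> E1 (Arr a) \<otimes> E1 (V (qtl a) 1)"
      using arr_e[of Alpha] arr_e[of Beta] arr_e[of Gamma] K1 by (simp add: E1_K qhd_def qtl_def E12_def[of _ _ _ _ "Arr _"])
    show "\<forall>a\<in>{Alpha, Beta, Gamma}. \<forall>z\<in>(if qhd a = 1 then UNIV else K) \<inter> (if qtl a = 1 then UNIV else K).
        E1 (Arr a) \<otimes> E1 (V (qtl a) z) = E1 (V (qhd a) (tw a z)) \<otimes> E1 (Arr a)"
    proof (intro ballI)
      fix a z assume a: "a \<in> {Alpha, Beta, Gamma}" and z: "z \<in> (if qhd a = 1 then UNIV else K) \<inter> (if qtl a = 1 then UNIV else K)"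
      have zK: "z \<in> K" using a z by (auto simp: qhd_def qtl_def)
      have h: "qhd a \<in> {1,2,3}" "qtl a \<in> {1,2,3}" by (auto simp: qhd_def qtl_def split: arrow.split)
      have ea: "E1 (Arr a) = e (Arr a)" using a by (auto simp: E12_def)
      show "E1 (Arr a) \<otimes> E1 (V (qtl a) z) = E1 (V (qhd a) (tw a z)) \<otimes> E1 (Arr a)"
        unfolding ea using E1_K[OF h(1) twK[OF zK]] E1_K[OF h(2) zK] arr_tw[of a z] a zK by auto
    qed
  qed
qed

lemma alg12_zero: "zero_eqs C E1"
  using zero by (simp add: zero_eqs_def E12_def)

lemma rt2_alg: "E21 C K t E1 y = e y"
proof (cases y)
  case (V i l)
  show ?thesis
  proof (cases "l \<in> K")
    case True
    then show ?thesis using V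
    proof (cases "i \<in> {1,2,3}")
      case True2: True
      show ?thesis using V True True2 by (simp add: E21_def E1_K)
    next
      case False2: False
      show ?thesis using V True False2 by (auto simp: E21_def kill_V E12_def)
    qed
  next
    case False
    then show ?thesis using V by (simp add: E21_def kill_V)
  qed
next
  case (Arr a)
  then show ?thesis by (cases "a = S1") (simp_all add: E21_def E1_t, simp add: E12_def)
qed

lemma E1_carr': "\<And>x. E12 C K t e x \<in> carrier C" by simp


end


locale lam1 = spq C F "\<lambda>i. if i = 1 then UNIV else K" "{Alpha, Beta, Gamma}" tw e sc + kt K t
  for C :: "('c, 'm) ring_scheme" (structure) and F K t tw e sc +
  assumes FK: "F \<subseteq> K" and qK: "t * t \<in> K" and twS1: "tw S1 = id"
    and twK: "\<And>a z. z \<in> K \<Longrightarrow> tw a z \<in> K"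
    and zero: "zero_eqs C e"
begin

abbreviation "E2 \<equiv> E21 C K t e"

lemma E2_K: "k \<in> K \<Longrightarrow> E2 (V i k) = e (V i k)"
  by (simp add: E21_def)

lemma KF: "k \<in> K \<Longrightarrow> k \<in> (if i = 1 then UNIV else K)" by simp

lemma E2_carr [simp]: "E2 x \<in> carrier C"
  by (auto simp: E21_def split: sgen.split)

lemma alg21: "sp_eqs C F (\<lambda>_. K) {Alpha, Beta, Gamma, S1} tw E2 sc"
  unfolding sp_eqs_def
proof (intro conjI)
  have FK': "\<And>c. c \<in> F \<Longrightarrow> c \<in> K" using FK by blast
  show "\<forall>i l. i \<notin> {1, 2, 3} \<or> l \<notin> K \<longrightarrow> E2 (V i l) = \<zero>"
    by (auto simp: E21_def kill_V)
  show "\<forall>a. a \<notin> {Alpha, Beta, Gamma, S1} \<longrightarrow> E2 (Arr a) = \<zero>"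
    by (intro allI, case_tac a) auto
  show "\<forall>i\<in>{1, 2, 3}. \<forall>l\<in>K. \<forall>m\<in>K. E2 (V i l) \<oplus> E2 (V i m) = E2 (V i (l + m))"
    using vadd by (simp add: E2_K Kadd)
  show "\<forall>i\<in>{1, 2, 3}. \<forall>l\<in>K. \<forall>m\<in>K. E2 (V i l) \<otimes> E2 (V i m) = E2 (V i (l * m))"
    using vmul by (simp add: E2_K Kmul)
  show "\<forall>i\<in>{1, 2, 3}. \<forall>j\<in>{1, 2, 3}. i \<noteq> j \<longrightarrow> (\<forall>l\<in>K. \<forall>m\<in>K. E2 (V i l) \<otimes> E2 (V j m) = \<zero>)"
    using vorth by (simp add: E2_K)
  show "E2 (V 1 1) \<oplus> (E2 (V 2 1) \<oplus> E2 (V 3 1)) = \<one>"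
    using vsum K1 by (simp add: E2_K)
  show "\<forall>c\<in>F. \<forall>i\<in>{1, 2, 3}. \<forall>l\<in>K. sc c \<otimes> E2 (V i l) = E2 (V i (c * l))"
    using vscal FK' by (simp add: E2_K Kmul)
  show "\<forall>a\<in>{Alpha, Beta, Gamma, S1}. E2 (Arr a) = E2 (V (qhd a) 1) \<otimes> E2 (Arr a) \<otimes> E2 (V (qtl a) 1)"
  proof -
    have "e (V 1 t) = e (V 1 1) \<otimes> e (V 1 t) \<otimes> e (V 1 1)"
      using vmul[of 1 1 t] vmul[of 1 t 1] by simp
    thus ?thesis
      using arr_e[of Alpha] arr_e[of Beta] arr_e[of Gamma] K1
      by (simp add: E2_K qhd_def qtl_def E21_def[of _ _ _ _ "Arr _"])
  qed
  show "\<forall>a\<in>{Alpha, Beta, Gamma, S1}. \<forall>z\<in>K \<inter> K. E2 (Arr a) \<otimes> E2 (V (qtl a) z) = E2 (V (qhd a) (tw a z)) \<otimes> E2 (Arr a)"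
  proof (intro ballI)
    fix a z assume a: "a \<in> {Alpha, Beta, Gamma, S1}" and z: "z \<in> K \<inter> K"
    hence zK: "z \<in> K" by simp
    show "E2 (Arr a) \<otimes> E2 (V (qtl a) z) = E2 (V (qhd a) (tw a z)) \<otimes> E2 (Arr a)"
    proof (cases "a = S1")
      case True
      have "e (V 1 t) \<otimes> e (V 1 z) = e (V 1 z) \<otimes> e (V 1 t)"
        using vmul[of 1 t z] vmul[of 1 z t] by (simp add: mult.commute)
      thus ?thesis using True zK by (simp add: E21_def qhd_def qtl_def twS1)
    next
      case False
      have h: "z \<in> (if qhd a = 1 then UNIV else K)" "z \<in> (if qtl a = 1 then UNIV else K)" using zK by auto
      have ea: "E2 (Arr a) = e (Arr a)" using False by (simp add: E21_def)
      show ?thesis unfolding ea using E2_K[OF twK[OF zK]] E2_K[OF zK] arr_tw[OF _ h] a False by auto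
    qed
  qed
qed

lemma alg21_zero: "zero_eqs C E2"
  using zero by (simp add: zero_eqs_def E21_def)

lemma alg21_loop: "E2 (Arr S1) \<otimes> E2 (Arr S1) = E2 (V 1 (t * t))"
  using vmul[of 1 t t] qK by (simp add: E21_def)

lemma rt1_alg: "E12 C K t E2 x = e x"
proof (cases x)
  case (V i l)
  show ?thesis
  proof (cases "i \<in> {2,3} \<and> l \<in> K")
    case True thus ?thesis using V by (simp add: E12_def E2_K)
  next
    case False
    show ?thesis
    proof (cases "i = 1")
      case True
      have "E12 C K t E2 x = e (V 1 (da l)) \<oplus> e (V 1 (db l)) \<otimes> e (V 1 t)"
        using V True by (simp add: E12_def E21_def da_K db_K)
      also have "\<dots> = e (V 1 l)"
        using vmul[of 1 "db l" t] vadd[of 1 "da l" "db l * t"] da_db[of l] by simp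
      finally show ?thesis using V True by simp
    next
      case False2: False
      thus ?thesis using V False kill_V by (auto simp: E12_def)
    qed
  qed
next
  case (Arr a)
  then show ?thesis using kill_A[of S1] by (simp add: E12_def E21_def)
qed

end

definition g12 :: "'a::field set \<Rightarrow> 'a \<Rightarrow> 'a sgen \<Rightarrow> ('a sgen, 'a) fa" where
  "g12 K t x = (case x of
      V i l \<Rightarrow> if i \<in> {2,3} \<and> l \<in> K then fa_gen (V i l)
               else if i = 1 then (\<lambda>w. fa_gen (V 1 (fst (dec K t l))) w +
                                      fa_mul (fa_gen (V 1 (snd (dec K t l)))) (fa_gen (Arr S1)) w)
               else (\<lambda>w. 0)
    | Arr a \<Rightarrow> if a = S1 then (\<lambda>w. 0) else fa_gen (Arr a))"

definition g21 :: "'a::field set \<Rightarrow> 'a \<Rightarrow> 'a sgen \<Rightarrow> ('a sgen, 'a) fa" where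
  "g21 K t x = (case x of
      V i l \<Rightarrow> if l \<in> K then fa_gen (V i l) else (\<lambda>w. 0)
    | Arr a \<Rightarrow> if a = S1 then fa_gen (V 1 t) else fa_gen (Arr a))"

lemma g12_carr: "subfield_set F \<Longrightarrow> g12 K t x \<in> fa_carr F"
  by (auto simp: g12_def split: sgen.split intro!: fa_gen_carr fa_add_carr fa_mul_carr fa_zero_carr)

lemma g21_carr: "subfield_set F \<Longrightarrow> g21 K t x \<in> fa_carr F"
  by (auto simp: g21_def split: sgen.split intro!: fa_gen_carr fa_zero_carr)

context fa_rh
begin

lemma rho_g12: "\<rho> (g12 K t x) = E12 C K t (\<lambda>y. \<rho> (fa_gen y)) x"
  by (auto simp: g12_def E12_def \<rho>_add \<rho>_mul \<rho>_zero cr split: sgen.split)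

lemma rho_g21: "\<rho> (g21 K t x) = E21 C K t (\<lambda>y. \<rho> (fa_gen y)) x"
  by (auto simp: g21_def E21_def \<rho>_zero split: sgen.split)

end

lemma quot_zero_kill:
  assumes F: "subfield_set F" and R: "R \<subseteq> fa_carr F" and r: "r \<in> R"
  shows "genideal (free_alg F) R +>\<^bsub>free_alg F\<^esub> r = \<zero>\<^bsub>free_alg F Quot genideal (free_alg F) R\<^esub>"
proof -
  interpret A: ring "free_alg F" by (rule ring_free_alg[OF F])
  have I: "ideal (genideal (free_alg F) R) (free_alg F)" by (rule A.genideal_ideal) (use R in simp)
  have "r \<in> genideal (free_alg F) R" using A.genideal_self[of R] R r by auto
  hence "genideal (free_alg F) R +>\<^bsub>free_alg F\<^esub> r = genideal (free_alg F) R"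
  proof -
    interpret I: ideal "genideal (free_alg F) R" "free_alg F" by (rule I)
    show ?thesis by (rule I.a_rcos_const) fact
  qed
  thus ?thesis by (simp add: FactRing_def)
qed

lemma quot_ring:
  assumes F: "subfield_set F" and R: "R \<subseteq> fa_carr F"
  shows "ring (free_alg F Quot genideal (free_alg F) R)"
    and "(+>\<^bsub>free_alg F\<^esub>) (genideal (free_alg F) R) \<in> ring_hom (free_alg F) (free_alg F Quot genideal (free_alg F) R)"
proof -
  interpret A: ring "free_alg F" by (rule ring_free_alg[OF F])
  have I: "ideal (genideal (free_alg F) R) (free_alg F)" by (rule A.genideal_ideal) (use R in simp)
  show "ring (free_alg F Quot genideal (free_alg F) R)" by (rule ideal.quotient_is_ring[OF I])
  show "(+>\<^bsub>free_alg F\<^esub>) (genideal (free_alg F) R) \<in> ring_hom (free_alg F) (free_alg F Quot genideal (free_alg F) R)"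
    by (rule ideal.rcos_ring_hom[OF I])
qed

lemma main_iso:
  fixes F K :: "'a::field set" and t :: 'a and tw :: "arrow \<Rightarrow> 'a \<Rightarrow> 'a"
  assumes F: "subfield_set F" and kt: "kt K t" and FK: "F \<subseteq> K" and qK: "t * t \<in> K"
    and twS1: "tw S1 = id" and twK: "\<And>a z. z \<in> K \<Longrightarrow> tw a z \<in> K"
  shows "F_alg_iso F
           (species_quot F {1,2,3} (\<lambda>i. if i = 1 then UNIV else K) {Alpha, Beta, Gamma} qhd qtl tw zero_rels)
           (species_quot F {1,2,3} (\<lambda>_. K) {Alpha, Beta, Gamma, S1} qhd qtl tw (zero_rels \<union> {loop_rel (t * t)}))
           (species_scal F {1,2,3} (\<lambda>i. if i = 1 then UNIV else K) {Alpha, Beta, Gamma} qhd qtl tw zero_rels)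
           (species_scal F {1,2,3} (\<lambda>_. K) {Alpha, Beta, Gamma, S1} qhd qtl tw (zero_rels \<union> {loop_rel (t * t)}))"
proof -
  let ?A = "free_alg F :: (('a sgen,'a) fa) ring"
  let ?Fld1 = "\<lambda>i::nat. if i = 1 then (UNIV::'a set) else K"
  let ?S1 = "species_rels F {1,2,3} ?Fld1 {Alpha, Beta, Gamma} qhd qtl tw"
  let ?S2 = "species_rels F {1,2,3} (\<lambda>_. K) {Alpha, Beta, Gamma, S1} qhd qtl tw"
  let ?R1 = "?S1 \<union> zero_rels"
  let ?R2 = "?S2 \<union> (zero_rels \<union> {loop_rel (t * t)})"
  let ?I1 = "genideal ?A ?R1" and ?I2 = "genideal ?A ?R2"
  let ?Q1 = "?A Quot ?I1" and ?Q2 = "?A Quot ?I2"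
  interpret kt K t by (rule kt)
  have R1c: "?R1 \<subseteq> fa_carr F" using species_rels_carr[OF F] zero_rels_carr[OF F] by blast
  have R2c: "?R2 \<subseteq> fa_carr F" using species_rels_carr[OF F] zero_rels_carr[OF F] loop_rel_carr[OF F] by blast
  note Q1 = quot_ring[OF F R1c] and Q2 = quot_ring[OF F R2c]
  interpret P1: fa_rh F ?Q1 "(+>\<^bsub>?A\<^esub>) ?I1" by (intro fa_rh.intro F Q1(1) Q1(2))
  interpret P2: fa_rh F ?Q2 "(+>\<^bsub>?A\<^esub>) ?I2" by (intro fa_rh.intro F Q2(1) Q2(2))
  have k1: "\<And>r. r \<in> ?R1 \<Longrightarrow> ?I1 +>\<^bsub>?A\<^esub> r = \<zero>\<^bsub>?Q1\<^esub>" by (rule quot_zero_kill[OF F R1c])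
  have k2: "\<And>r. r \<in> ?R2 \<Longrightarrow> ?I2 +>\<^bsub>?A\<^esub> r = \<zero>\<^bsub>?Q2\<^esub>" by (rule quot_zero_kill[OF F R2c])
  have K0': "0 \<in> K" by (rule K0)
  have sp2: "sp_eqs ?Q2 F (\<lambda>_. K) {Alpha, Beta, Gamma, S1} tw (\<lambda>x. ?I2 +>\<^bsub>?A\<^esub> fa_gen x) (\<lambda>c. ?I2 +>\<^bsub>?A\<^esub> fa_scal c)"
    by (rule P2.rels_eqs) (use k2 in blast)
  have z2: "zero_eqs ?Q2 (\<lambda>x. ?I2 +>\<^bsub>?A\<^esub> fa_gen x)"
    by (rule P2.rels_zero_eqs) (use k2 in blast)
  have l2: "(?I2 +>\<^bsub>?A\<^esub> fa_gen (Arr S1)) \<otimes>\<^bsub>?Q2\<^esub> (?I2 +>\<^bsub>?A\<^esub> fa_gen (Arr S1)) = ?I2 +>\<^bsub>?A\<^esub> fa_gen (V 1 (t * t))"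
    using P2.loop_iff[of "t * t"] k2[of "loop_rel (t * t)"] by simp
  have sp1: "sp_eqs ?Q1 F ?Fld1 {Alpha, Beta, Gamma} tw (\<lambda>x. ?I1 +>\<^bsub>?A\<^esub> fa_gen x) (\<lambda>c. ?I1 +>\<^bsub>?A\<^esub> fa_scal c)"
    by (rule P1.rels_eqs) (use k1 in blast)
  have z1: "zero_eqs ?Q1 (\<lambda>x. ?I1 +>\<^bsub>?A\<^esub> fa_gen x)"
    by (rule P1.rels_zero_eqs) (use k1 in blast)
  have c2: "\<And>x. ?I2 +>\<^bsub>?A\<^esub> fa_gen x \<in> carrier ?Q2" by (rule P2.\<rho>_carr[OF fa_gen_carr[OF F]])
  have s2: "\<And>c. c \<in> F \<Longrightarrow> ?I2 +>\<^bsub>?A\<^esub> fa_scal c \<in> carrier ?Q2" by (rule P2.\<rho>_carr[OF fa_scal_carr[OF F]])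
  have c1: "\<And>x. ?I1 +>\<^bsub>?A\<^esub> fa_gen x \<in> carrier ?Q1" by (rule P1.\<rho>_carr[OF fa_gen_carr[OF F]])
  have s1: "\<And>c. c \<in> F \<Longrightarrow> ?I1 +>\<^bsub>?A\<^esub> fa_scal c \<in> carrier ?Q1" by (rule P1.\<rho>_carr[OF fa_scal_carr[OF F]])
  interpret L2: lam2 ?Q2 F K t tw "\<lambda>x. ?I2 +>\<^bsub>?A\<^esub> fa_gen x" "\<lambda>c. ?I2 +>\<^bsub>?A\<^esub> fa_scal c"
    apply (rule lam2.intro)
      apply (rule spq.intro[OF Q2(1)], rule spq_axioms.intro[OF sp2 c2 s2])
      apply assumption
      apply (rule K0')
     apply (rule assms(2))
    apply (rule lam2_axioms.intro)
    using FK qK twS1 twK l2 z2 by auto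
  interpret L1: lam1 ?Q1 F K t tw "\<lambda>x. ?I1 +>\<^bsub>?A\<^esub> fa_gen x" "\<lambda>c. ?I1 +>\<^bsub>?A\<^esub> fa_scal c"
    apply (rule lam1.intro)
      apply (rule spq.intro[OF Q1(1)], rule spq_axioms.intro[OF sp1 c1 s1])
      apply assumption
      apply (simp add: K0')
     apply (rule assms(2))
    apply (rule lam1_axioms.intro)
    using FK qK twS1 twK z1 by auto
  have K12: "\<Phi> r = \<zero>\<^bsub>?Q2\<^esub>"
    if hom: "\<Phi> \<in> ring_hom ?A ?Q2" and gen: "\<And>x. \<Phi> (fa_gen x) = ?I2 +>\<^bsub>?A\<^esub> g12 K t x"
      and sc: "\<And>c. c \<in> F \<Longrightarrow> \<Phi> (fa_scal c) = ?I2 +>\<^bsub>?A\<^esub> fa_scal c" and r: "r \<in> ?R1" for \<Phi> r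
  proof -
    interpret H: fa_rh F ?Q2 \<Phi> by (intro fa_rh.intro F Q2(1) hom)
    have ge: "(\<lambda>x. \<Phi> (fa_gen x)) = E12 ?Q2 K t (\<lambda>x. ?I2 +>\<^bsub>?A\<^esub> fa_gen x)"
      using gen P2.rho_g12 by auto
    have "sp_eqs ?Q2 F ?Fld1 {Alpha, Beta, Gamma} tw (\<lambda>x. \<Phi> (fa_gen x)) (\<lambda>c. \<Phi> (fa_scal c))"
      unfolding ge by (subst sp_eqs_cong[of F "\<lambda>c. \<Phi> (fa_scal c)" "\<lambda>c. ?I2 +>\<^bsub>?A\<^esub> fa_scal c"], rule sc, assumption, rule L2.alg12)
    hence a: "\<forall>r\<in>?S1. \<Phi> r = \<zero>\<^bsub>?Q2\<^esub>" by (rule H.eqs_rels)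
    have b: "\<forall>r\<in>zero_rels. \<Phi> r = \<zero>\<^bsub>?Q2\<^esub>"
      by (rule H.zero_eqs_rels) (use L2.alg12_zero ge in simp)
    show ?thesis using a b r by blast
  qed
  have K21: "\<Psi> r = \<zero>\<^bsub>?Q1\<^esub>"
    if hom: "\<Psi> \<in> ring_hom ?A ?Q1" and gen: "\<And>x. \<Psi> (fa_gen x) = ?I1 +>\<^bsub>?A\<^esub> g21 K t x"
      and sc: "\<And>c. c \<in> F \<Longrightarrow> \<Psi> (fa_scal c) = ?I1 +>\<^bsub>?A\<^esub> fa_scal c" and r: "r \<in> ?R2" for \<Psi> r
  proof -
    interpret H: fa_rh F ?Q1 \<Psi> by (intro fa_rh.intro F Q1(1) hom)
    have ge: "(\<lambda>x. \<Psi> (fa_gen x)) = E21 ?Q1 K t (\<lambda>x. ?I1 +>\<^bsub>?A\<^esub> fa_gen x)"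
      using gen P1.rho_g21 by auto
    have "sp_eqs ?Q1 F (\<lambda>_. K) {Alpha, Beta, Gamma, S1} tw (\<lambda>x. \<Psi> (fa_gen x)) (\<lambda>c. \<Psi> (fa_scal c))"
      unfolding ge by (subst sp_eqs_cong[of F "\<lambda>c. \<Psi> (fa_scal c)" "\<lambda>c. ?I1 +>\<^bsub>?A\<^esub> fa_scal c"], rule sc, assumption, rule L1.alg21)
    hence a: "\<forall>r\<in>?S2. \<Psi> r = \<zero>\<^bsub>?Q1\<^esub>" by (rule H.eqs_rels)
    have b: "\<forall>r\<in>zero_rels. \<Psi> r = \<zero>\<^bsub>?Q1\<^esub>"
      by (rule H.zero_eqs_rels) (use L1.alg21_zero ge in simp)
    have c: "\<Psi> (loop_rel (t * t)) = \<zero>\<^bsub>?Q1\<^esub>"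
      using H.loop_iff[of "t * t"] L1.alg21_loop ge by (metis (no_types, lifting))
    show ?thesis using a b c r by blast
  qed
  have RT1: "\<Psi> (g12 K t x) = ?I1 +>\<^bsub>?A\<^esub> fa_gen x"
    if hom: "\<Psi> \<in> ring_hom ?A ?Q1" and gen: "\<And>y. \<Psi> (fa_gen y) = ?I1 +>\<^bsub>?A\<^esub> g21 K t y"
      and sc: "\<And>c. c \<in> F \<Longrightarrow> \<Psi> (fa_scal c) = ?I1 +>\<^bsub>?A\<^esub> fa_scal c" for \<Psi> x
  proof -
    interpret H: fa_rh F ?Q1 \<Psi> by (intro fa_rh.intro F Q1(1) hom)
    have ge: "(\<lambda>x. \<Psi> (fa_gen x)) = E21 ?Q1 K t (\<lambda>x. ?I1 +>\<^bsub>?A\<^esub> fa_gen x)"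
      using gen P1.rho_g21 by auto
    show ?thesis using H.rho_g12[of K t x] L1.rt1_alg[of x] ge by simp
  qed
  have RT2: "\<Phi> (g21 K t x) = ?I2 +>\<^bsub>?A\<^esub> fa_gen x"
    if hom: "\<Phi> \<in> ring_hom ?A ?Q2" and gen: "\<And>y. \<Phi> (fa_gen y) = ?I2 +>\<^bsub>?A\<^esub> g12 K t y"
      and sc: "\<And>c. c \<in> F \<Longrightarrow> \<Phi> (fa_scal c) = ?I2 +>\<^bsub>?A\<^esub> fa_scal c" for \<Phi> x
  proof -
    interpret H: fa_rh F ?Q2 \<Phi> by (intro fa_rh.intro F Q2(1) hom)
    have ge: "(\<lambda>x. \<Phi> (fa_gen x)) = E12 ?Q2 K t (\<lambda>x. ?I2 +>\<^bsub>?A\<^esub> fa_gen x)"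
      using gen P2.rho_g12 by auto
    show ?thesis using H.rho_g21[of K t x] L2.rt2_alg[of x] ge by simp
  qed
  show ?thesis
    unfolding species_quot_def species_scal_def
    apply (rule gen_iso[OF F R1c R2c g12_carr[OF F] g21_carr[OF F]])
       apply (rule K12; assumption)
      apply (rule K21; assumption)
     apply (rule RT1; assumption)
    apply (rule RT2; assumption)
    done
qed

declare One_nat_def [simp]

definition R0 :: "'a::field ring" where
  "R0 = \<lparr> carrier = UNIV, mult = (*), one = 1, zero = 0, add = (+) \<rparr>"

lemma R0_simps [simp]: "carrier R0 = UNIV" "mult R0 = (*)" "one R0 = 1" "zero R0 = 0" "add R0 = (+)"
  by (simp_all add: R0_def)

lemma cring_R0: "cring (R0 :: 'a::field ring)"
  apply (rule cringI)
    apply (rule abelian_groupI)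
         apply (auto simp: algebra_simps)
   apply (metis add.right_inverse)
  apply (rule comm_monoidI)
  by (auto simp: algebra_simps)

lemma field_R0: "field (R0 :: 'a::field ring)"
proof -
  interpret cring "R0 :: 'a ring" by (rule cring_R0)
  show ?thesis
    by (rule cring_fieldI2) (auto intro: exI[of _ "inverse _"] simp: field_simps)
qed

lemma R0_neg: "\<ominus>\<^bsub>R0\<^esub> (x::'a::field) = - x"
proof -
  interpret cring "R0 :: 'a ring" by (rule cring_R0)
  show ?thesis by (rule minus_equality) auto
qed

lemma R0_inv: assumes x: "(x::'a::field) \<noteq> 0" shows "inv\<^bsub>R0\<^esub> x = inverse x"
proof -
  interpret cring "R0 :: 'a ring" by (rule cring_R0)
  show ?thesis by (rule inv_unique'[symmetric]) (use x in auto)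
qed

lemma subfield_neg: "subfield_set F \<Longrightarrow> h \<in> F \<Longrightarrow> - h \<in> F"
  unfolding subfield_set_def by (metis diff_0)

lemma subfield_R0: assumes F: "subfield_set F" shows "subfield F (R0 :: 'a::field ring)"
proof -
  interpret field "R0 :: 'a ring" by (rule field_R0)
  show ?thesis
  proof (rule subfieldI')
    show "subring F R0"
      by (rule subringI) (use F subfield_neg[OF F] in \<open>auto simp: subfield_set_def R0_neg\<close>)
    show "\<And>k. k \<in> F - {\<zero>\<^bsub>R0\<^esub>} \<Longrightarrow> inv\<^bsub>R0\<^esub> k \<in> F"
      using F by (auto simp: R0_inv subfield_set_def)
  qed
qed

lemma combine_R0: "ring.combine R0 Ks Us = (\<Sum>i<min (length Ks) (length Us). Ks ! i * Us ! i)"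
proof -
  interpret cring "R0 :: 'a ring" by (rule cring_R0)
  show ?thesis
  proof (induction Ks Us rule: combine.induct)
    case (1 k Ks u Us)
    then show ?case by (simp del: sum.lessThan_Suc add: sum.lessThan_Suc_shift)
  qed auto
qed

lemma LA:
  fixes F :: "'a::field set" and xs :: "'a list"
  assumes F: "subfield_set F" and deg: "ext_degree_is F n" and len: "length xs = n"
    and indep: "\<And>c. (\<forall>i<n. c i \<in> F) \<Longrightarrow> (\<Sum>i<n. c i * xs ! i) = 0 \<Longrightarrow> \<forall>i<n. c i = 0"
  shows "\<exists>c. (\<forall>i<n. c i \<in> F) \<and> y = (\<Sum>i<n. c i * xs ! i)"
proof -
  interpret E: embedded_algebra F "R0 :: 'a ring"
    by (intro embedded_algebra.intro subfield_R0[OF F] cring.axioms(1)[OF cring_R0])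
  have ind: "E.independent F Us"
    if l: "length Us = n" and I: "\<And>c. (\<forall>i<n. c i \<in> F) \<Longrightarrow> (\<Sum>i<n. c i * Us ! i) = 0 \<Longrightarrow> \<forall>i<n. c i = 0"
    for Us :: "'a list"
  proof (rule E.trivial_combine_imp_independent)
    show "set Us \<subseteq> carrier R0" by simp
    fix Ks assume Ks: "set Ks \<subseteq> F" and c0: "E.combine Ks Us = \<zero>\<^bsub>R0\<^esub>"
    define c where "c i = (if i < length Ks then Ks ! i else 0)" for i
    have cF: "\<forall>i<n. c i \<in> F" using Ks F by (auto simp: c_def subfield_set_def)
    have "(\<Sum>i<n. c i * Us ! i) = (\<Sum>i<min (length Ks) n. Ks ! i * Us ! i)"
      by (rule sum.mono_neutral_cong_right) (auto simp: c_def)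
    also have "\<dots> = 0" using c0 l by (simp add: combine_R0)
    finally have "\<forall>i<n. c i = 0" using I cF by blast
    thus "set (take (length Us) Ks) \<subseteq> {\<zero>\<^bsub>R0\<^esub>}"
      using l by (auto simp: set_conv_nth c_def)
  qed (rule subfield_R0[OF F])
  obtain b where bsp: "\<forall>x. \<exists>c. (\<forall>i<n. c i \<in> F) \<and> x = (\<Sum>i<n. c i * b i)"
    and bind: "\<forall>c. (\<forall>i<n. c i \<in> F) \<longrightarrow> (\<Sum>i<n. c i * b i) = 0 \<longrightarrow> (\<forall>i<n. c i = 0)"
    using deg unfolding ext_degree_is_def by blast
  let ?Bs = "map b [0..<n]"
  have Bind: "E.independent F ?Bs" by (rule ind) (use bind in auto)
  have BSpan: "E.Span F ?Bs = UNIV"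
  proof -
    have "x \<in> E.Span F ?Bs" for x
    proof -
      obtain c where c: "\<forall>i<n. c i \<in> F" "x = (\<Sum>i<n. c i * b i)" using bsp by blast
      have "\<exists>Ks. set Ks \<subseteq> F \<and> length Ks = length ?Bs \<and> x = E.combine Ks ?Bs"
        by (rule exI[of _ "map c [0..<n]"]) (use c in \<open>auto simp: combine_R0\<close>)
      thus ?thesis
        using E.Span_mem_iff_length_version[where Us="?Bs" and a=x and K=F, OF subfield_R0[OF F]] by simp
    qed
    thus ?thesis by auto
  qed
  have dim: "E.dimension n F UNIV"
    using E.dimension_independent[OF Bind] BSpan subfield_R0[OF F] by simp
  have xind: "E.independent F xs" by (rule ind[OF len]) (use indep in auto)
  have "E.Span F xs = UNIV"
    using E.independent_length_eq_dimension[OF _ dim xind] len subfield_R0[OF F] by simp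
  hence "y \<in> E.Span F xs" by simp
  then obtain Ks where Ks: "set Ks \<subseteq> F" "length Ks = length xs" "y = E.combine Ks xs"
    using E.Span_mem_iff_length_version[where Us=xs and a=y and K=F] subfield_R0[OF F] by auto
  show ?thesis
    apply (rule exI[of _ "\<lambda>i. Ks ! i"])
    using Ks len by (auto simp: combine_R0 set_conv_nth)
qed

lemma faut:
  assumes "field_aut s"
  shows faut_add: "s (x + y) = s x + s y" and faut_mul: "s (x * y) = s x * s y" and faut_one: "s 1 = 1"
  using assms by (auto simp: field_aut_def)

lemma faut_zero: assumes "field_aut s" shows "s 0 = (0::'a::field)"
proof -
  have "s 0 + s 0 = s 0 + 0" using faut_add[OF assms, of 0 0] by simp
  thus ?thesis by (rule add_left_imp_eq)
qed

lemma faut_neg: "field_aut s \<Longrightarrow> s (- x) = - s (x::'a::field)"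
  using faut_add[of s x "- x"] faut_zero[of s] by (simp add: eq_neg_iff_add_eq_0 add.commute)

lemma faut_diff: "field_aut s \<Longrightarrow> s (x - y) = s x - s (y::'a::field)"
  using faut_add[of s x "- y"] faut_neg[of s y] by simp

lemma faut_inv: "field_aut s \<Longrightarrow> s (inverse x) = inverse (s (x::'a::field))"
proof (cases "x = 0")
  case True
  assume s: "field_aut s" thus ?thesis using True faut_zero[OF s] by simp
next
  case False
  assume s: "field_aut s"
  have "s x * s (inverse x) = 1" using faut_mul[OF s, of x "inverse x"] faut_one[OF s] False by simp
  thus ?thesis by (metis inverse_unique)
qed

lemma faut_pow: "field_aut s \<Longrightarrow> s (x ^ k) = (s (x::'a::field)) ^ k"
  by (induction k) (auto simp: faut_one faut_mul)

lemma subfield_preimage: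
  assumes s: "field_aut s" and M: "subfield_set M"
  shows "subfield_set {x::'a::field. s x \<in> M}"
  using M unfolding subfield_set_def
  by (simp add: faut_zero[OF s] faut_one[OF s] faut_add[OF s] faut_diff[OF s] faut_mul[OF s] faut_inv[OF s])

lemma subfield_fix2:
  assumes s: "field_aut s"
  shows "subfield_set {x::'a::field. s (s x) = x}"
  unfolding subfield_set_def
  by (simp add: faut_zero[OF s] faut_one[OF s] faut_add[OF s] faut_diff[OF s] faut_mul[OF s] faut_inv[OF s])

lemma adjoin_subfield: "subfield_set (adjoin F u)"
  unfolding adjoin_def subfield_set_def by auto

lemma adjoin_incl: "F \<subseteq> adjoin F u" "u \<in> adjoin F u"
  unfolding adjoin_def by auto

lemma adjoin_min: "subfield_set M \<Longrightarrow> F \<subseteq> M \<Longrightarrow> u \<in> M \<Longrightarrow> adjoin F u \<subseteq> M"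
  unfolding adjoin_def by auto

lemma sum4: "(\<Sum>i<(4::nat). f i) = f 0 + f 1 + f 2 + (f 3 :: 'a::comm_monoid_add)"
  by (simp add: numeral_eq_Suc lessThan_Suc ac_simps)
lemma sum2: "(\<Sum>i<(2::nat). f i) = f 0 + (f 1 :: 'a::comm_monoid_add)"
  by (simp add: numeral_eq_Suc lessThan_Suc ac_simps)

lemma partB:
  fixes F :: "'b::field set" and \<theta> :: "'b \<Rightarrow> 'b" and u :: 'b
  assumes F: "subfield_set F" and deg: "ext_degree_is F 2" and two: "(2::'b) \<noteq> 0"
    and th: "\<theta> \<in> Gal F" and u0: "u \<noteq> 0" and thu: "\<theta> u = - u"
  shows "F_alg_iso F
           (species_quot F {1,2,3} (\<lambda>i. if i = 1 then UNIV else F) {Alpha, Beta, Gamma} qhd qtl (\<lambda>_. id) zero_rels)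
           (species_quot F {1,2,3} (\<lambda>_. F) {Alpha, Beta, Gamma, S1} qhd qtl (\<lambda>_. id) (zero_rels \<union> {loop_rel (u ^ 2)}))
           (species_scal F {1,2,3} (\<lambda>i. if i = 1 then UNIV else F) {Alpha, Beta, Gamma} qhd qtl (\<lambda>_. id) zero_rels)
           (species_scal F {1,2,3} (\<lambda>_. F) {Alpha, Beta, Gamma, S1} qhd qtl (\<lambda>_. id) (zero_rels \<union> {loop_rel (u ^ 2)}))"
proof -
  have s: "field_aut \<theta>" and fx: "\<And>x. x \<in> F \<Longrightarrow> \<theta> x = x" using th by (auto simp: Gal_def)
  have Fc: "\<And>a b. a \<in> F \<Longrightarrow> b \<in> F \<Longrightarrow> a * b \<in> F" "\<And>a. a \<in> F \<Longrightarrow> inverse a \<in> F"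
    "\<And>a b. a \<in> F \<Longrightarrow> b \<in> F \<Longrightarrow> a + b \<in> F"
    using F by (auto simp: subfield_set_def)
  have uF: "u \<notin> F"
  proof
    assume "u \<in> F"
    hence "u = - u" using fx thu by metis
    hence "2 * u = 0" by simp
    thus False using two u0 by simp
  qed
  have span: "\<exists>a\<in>F. \<exists>b\<in>F. x = a + b * u" for x
  proof -
    have "\<exists>c. (\<forall>i<2. c i \<in> F) \<and> x = (\<Sum>i<2. c i * [1, u] ! i)"
    proof (rule LA[OF F deg])
      fix c assume cF: "\<forall>i<2. c i \<in> F" and z: "(\<Sum>i<2. c i * [1, u] ! i) = 0"
      have z': "c 0 + c 1 * u = 0" using z by (simp add: sum2)
      have c1: "c 1 = 0"
      proof (rule ccontr)
        assume "c 1 \<noteq> 0"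
        hence "u = (- c 0) * inverse (c 1)" using z' by (simp add: field_simps eq_neg_iff_add_eq_0)
        moreover have "(- c 0) * inverse (c 1) \<in> F" using cF Fc subfield_neg[OF F] by simp
        ultimately show False using uF by simp
      qed
      show "\<forall>i<2. c i = 0" using z' c1 by (auto simp: less_2_cases_iff)
    qed simp
    then obtain c where "\<forall>i<2. c i \<in> F" "x = (\<Sum>i<2. c i * [1, u] ! i)" by blast
    thus ?thesis by (intro bexI[of _ "c 0"] bexI[of _ "c 1"]) (auto simp: sum2)
  qed
  have kt: "kt F u" by (rule kt.intro[OF F uF]) (use span in blast)
  have uu: "u * u \<in> F"
  proof -
    obtain a b where ab: "a \<in> F" "b \<in> F" "u * u = a + b * u" using span by blast
    have "\<theta> (u * u) = u * u" using faut_mul[OF s] thu by simp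
    moreover have "\<theta> (u * u) = a - b * u"
      using ab faut_add[OF s] faut_mul[OF s] fx thu by simp
    ultimately have "2 * (b * u) = 0" using ab(3) by (simp add: algebra_simps)
    hence "b = 0" using two u0 by simp
    thus ?thesis using ab by simp
  qed
  show ?thesis
    using main_iso[OF F kt subset_refl uu, of "\<lambda>_. id"] by (simp add: power2_eq_square)
qed

declare One_nat_def [simp del]

lemma vand:
  fixes A B C D z :: "'a::field"
  assumes two: "(2::'a) \<noteq> 0" and z: "z \<noteq> 0"
    and e0: "A + B + C + D = 0" and e1: "A + z*B - C - z*D = 0"
    and e2: "A - B + C - D = 0" and e3: "A - z*B - C + z*D = 0"
  shows "A = 0 \<and> B = 0 \<and> C = 0 \<and> D = 0"
proof -
  have "2*(A+C) = (A + B + C + D) + (A - B + C - D)" by (simp add: algebra_simps)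
  also have "\<dots> = 0" by (simp only: e0 e2) simp
  finally have s1: "A + C = 0" by (metis two mult_eq_0_iff)
  have "2*(A-C) = (A + z*B - C - z*D) + (A - z*B - C + z*D)" by (simp add: algebra_simps)
  also have "\<dots> = 0" by (simp only: e1 e3) simp
  finally have s2: "A - C = 0" by (metis two mult_eq_0_iff)
  have "2*(B+D) = (A + B + C + D) - (A - B + C - D)" by (simp add: algebra_simps)
  also have "\<dots> = 0" by (simp only: e0 e2) simp
  finally have s3: "B + D = 0" by (metis two mult_eq_0_iff)
  have "2*(z*(B-D)) = (A + z*B - C - z*D) - (A - z*B - C + z*D)" by (simp add: algebra_simps)
  also have "\<dots> = 0" by (simp only: e1 e3) simp
  finally have s4: "B - D = 0" by (metis two z mult_eq_0_iff)
  have "2 * A = (A + C) + (A - C)" by (simp add: algebra_simps)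
  also have "\<dots> = 0" by (simp only: s1 s2) simp
  finally have a0: "A = 0" by (metis two mult_eq_0_iff)
  have "2 * B = (B + D) + (B - D)" by (simp add: algebra_simps)
  also have "\<dots> = 0" by (simp only: s3 s4) simp
  finally have b0: "B = 0" by (metis two mult_eq_0_iff)
  show ?thesis using a0 b0 s1 s3 by simp
qed

lemma Pz:
  fixes a b c d z v :: "'a::field"
  assumes zz: "z * z = -1"
  shows "a + b*(z*v) + c*(z*v)^2 + d*(z*v)^3 = a + z*(b*v) - c*v^2 - z*(d*v^3)"
    and "a + b*(-v) + c*(-v)^2 + d*(-v)^3 = a - b*v + c*v^2 - d*v^3"
    and "a + b*(-(z*v)) + c*(-(z*v))^2 + d*(-(z*v))^3 = a - z*(b*v) - c*v^2 + z*(d*v^3)"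
proof -
  have z2: "z^2 = -1" and z3: "z^3 = -z" using zz by (simp_all add: power2_eq_square power3_eq_cube)
  show "a + b*(z*v) + c*(z*v)^2 + d*(z*v)^3 = a + z*(b*v) - c*v^2 - z*(d*v^3)"
    by (simp add: power_mult_distrib z2 z3 algebra_simps)
  show "a + b*(-v) + c*(-v)^2 + d*(-v)^3 = a - b*v + c*v^2 - d*v^3"
    by simp
  show "a + b*(-(z*v)) + c*(-(z*v))^2 + d*(-(z*v))^3 = a - z*(b*v) - c*v^2 + z*(d*v^3)"
    by (simp add: power_mult_distrib z2 z3 algebra_simps)
qed

lemma partA:
  fixes F :: "'a::field set" and \<rho> :: "'a \<Rightarrow> 'a" and \<zeta> v :: 'a and xa xb xc :: nat
  assumes cyc: "cyclic_galois F 4 \<rho>" and zF: "\<zeta> \<in> F" and z4: "\<zeta> ^ 4 = 1" and z2: "\<zeta> ^ 2 \<noteq> 1"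
    and v0: "v \<noteq> 0" and rv: "\<rho> v = \<zeta> * v"
  shows "F_alg_iso F
           (species_quot F {1,2,3} (\<lambda>i. if i = 1 then UNIV else adjoin F (v ^ 2)) {Alpha, Beta, Gamma} qhd qtl
              (\<lambda>a. case a of Alpha \<Rightarrow> \<rho> ^^ xa | Beta \<Rightarrow> \<rho> ^^ xb | Gamma \<Rightarrow> \<rho> ^^ xc | S1 \<Rightarrow> id) zero_rels)
           (species_quot F {1,2,3} (\<lambda>_. adjoin F (v ^ 2)) {Alpha, Beta, Gamma, S1} qhd qtl
              (\<lambda>a. case a of Alpha \<Rightarrow> \<rho> ^^ xa | Beta \<Rightarrow> \<rho> ^^ xb | Gamma \<Rightarrow> \<rho> ^^ xc | S1 \<Rightarrow> id)
              (zero_rels \<union> {loop_rel (v ^ 2)}))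
           (species_scal F {1,2,3} (\<lambda>i. if i = 1 then UNIV else adjoin F (v ^ 2)) {Alpha, Beta, Gamma} qhd qtl
              (\<lambda>a. case a of Alpha \<Rightarrow> \<rho> ^^ xa | Beta \<Rightarrow> \<rho> ^^ xb | Gamma \<Rightarrow> \<rho> ^^ xc | S1 \<Rightarrow> id) zero_rels)
           (species_scal F {1,2,3} (\<lambda>_. adjoin F (v ^ 2)) {Alpha, Beta, Gamma, S1} qhd qtl
              (\<lambda>a. case a of Alpha \<Rightarrow> \<rho> ^^ xa | Beta \<Rightarrow> \<rho> ^^ xb | Gamma \<Rightarrow> \<rho> ^^ xc | S1 \<Rightarrow> id)
              (zero_rels \<union> {loop_rel (v ^ 2)}))"
proof -
  let ?L = "adjoin F (v ^ 2)"
  let ?tw = "\<lambda>a. case a of Alpha \<Rightarrow> \<rho> ^^ xa | Beta \<Rightarrow> \<rho> ^^ xb | Gamma \<Rightarrow> \<rho> ^^ xc | S1 \<Rightarrow> id"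
  have F: "subfield_set F" and deg: "ext_degree_is F 4" and rG: "\<rho> \<in> Gal F"
    using cyc by (auto simp: cyclic_galois_def)
  have s: "field_aut \<rho>" and fx: "\<And>x. x \<in> F \<Longrightarrow> \<rho> x = x" using rG by (auto simp: Gal_def)
  have zz: "\<zeta> * \<zeta> = - 1"
  proof -
    have "(\<zeta> * \<zeta> - 1) * (\<zeta> * \<zeta> + 1) = 0" using z4 by (simp add: algebra_simps power4_eq_xxxx)
    moreover have "\<zeta> * \<zeta> - 1 \<noteq> 0" using z2 by (simp add: power2_eq_square)
    ultimately show ?thesis by (simp add: eq_neg_iff_add_eq_0)
  qed
  have two: "(2::'a) \<noteq> 0"
  proof
    assume "(2::'a) = 0"
    hence "(1::'a) = - 1" by (simp add: eq_neg_iff_add_eq_0 one_add_one)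
    thus False using z2 zz by (simp add: power2_eq_square)
  qed
  have zzw: "\<And>w. \<zeta> * (\<zeta> * w) = - w" by (simp add: mult.assoc[symmetric] zz)
  have L: "subfield_set ?L" by (rule adjoin_subfield)
  have FL: "F \<subseteq> ?L" and uL: "v ^ 2 \<in> ?L" by (rule adjoin_incl)+
  have ru: "\<rho> (v ^ 2) = - (v ^ 2)"
  proof -
    have "\<rho> (v ^ 2) = (\<zeta> * v) * (\<zeta> * v)" using faut_pow[OF s, of v 2] rv by (simp add: power2_eq_square)
    also have "\<dots> = \<zeta> * (\<zeta> * (v * v))" by (simp add: ac_simps)
    also have "\<dots> = - (v ^ 2)" using zzw by (simp add: power2_eq_square)
    finally show ?thesis .
  qed
  have rL: "\<rho> x \<in> ?L" if "x \<in> ?L" for x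
  proof -
    have "?L \<subseteq> {x. \<rho> x \<in> ?L}"
      by (rule adjoin_min[OF subfield_preimage[OF s L]]) (use FL fx uL ru subfield_neg[OF L uL] in auto)
    thus ?thesis using that by blast
  qed
  have twK: "(\<rho> ^^ k) z \<in> ?L" if "z \<in> ?L" for k z
    by (induction k) (use that rL in auto)
  have twK': "?tw a z \<in> ?L" if "z \<in> ?L" for a z
    by (cases a) (use twK that in auto)
  have vL: "v \<notin> ?L"
  proof
    assume "v \<in> ?L"
    moreover have "?L \<subseteq> {x. \<rho> (\<rho> x) = x}"
      by (rule adjoin_min[OF subfield_fix2[OF s]]) (use fx ru faut_neg[OF s] in auto)
    ultimately have "\<rho> (\<rho> v) = v" by blast
    moreover have "\<rho> (\<rho> v) = - v" using rv faut_mul[OF s] fx[OF zF] zz by (simp add: mult.assoc[symmetric])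
    ultimately have "2 * v = 0" by simp
    thus False using two v0 by simp
  qed
  have span: "\<exists>a\<in>?L. \<exists>b\<in>?L. x = a + b * v" for x
  proof -
    have "\<exists>c. (\<forall>i<4. c i \<in> F) \<and> x = (\<Sum>i<4. c i * [1, v, v^2, v^3] ! i)"
    proof (rule LA[OF F deg])
      fix c assume cF: "\<forall>i<4. c i \<in> F" and z: "(\<Sum>i<4. c i * [1, v, v^2, v^3] ! i) = 0"
      define P where "P w = c 0 + c 1 * w + c 2 * w^2 + c 3 * w^3" for w
      have cF': "c 0 \<in> F" "c 1 \<in> F" "c 2 \<in> F" "c 3 \<in> F" using cF by auto
      have rP: "\<rho> (P w) = P (\<rho> w)" for w
        unfolding P_def by (simp add: faut_add[OF s] faut_mul[OF s] faut_pow[OF s] fx cF')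
      have rzw: "\<rho> (\<zeta> * w) = \<zeta> * \<rho> w" for w by (simp add: faut_mul[OF s] fx zF)
      have P0: "P v = 0" using z by (simp add: sum4 P_def numeral_eq_Suc One_nat_def)
      have P1: "P (\<zeta> * v) = 0" using rP[of v] P0 rv faut_zero[OF s] by simp
      have P2: "P (\<zeta> * (\<zeta> * v)) = 0" using rP[of "\<zeta> * v"] P1 rv rzw faut_zero[OF s] by simp
      have P3: "P (\<zeta> * (\<zeta> * (\<zeta> * v))) = 0" using rP[of "\<zeta> * (\<zeta> * v)"] P2 rv rzw faut_zero[OF s] by simp
      have znz: "\<zeta> \<noteq> 0" using zz by auto
      have E0: "c 0 + c 1 * v + c 2 * v^2 + c 3 * v^3 = 0" using P0 by (simp add: P_def)
      have E1: "c 0 + \<zeta> * (c 1 * v) - c 2 * v^2 - \<zeta> * (c 3 * v^3) = 0"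
        using P1 Pz(1)[OF zz, of "c 0" "c 1" v "c 2" "c 3"] by (simp add: P_def)
      have E2: "c 0 - c 1 * v + c 2 * v^2 - c 3 * v^3 = 0"
        using P2 Pz(2)[of "c 0" "c 1" v "c 2" "c 3"] zzw[of v] by (simp add: P_def)
      have E3: "c 0 - \<zeta> * (c 1 * v) - c 2 * v^2 + \<zeta> * (c 3 * v^3) = 0"
        using P3 Pz(3)[OF zz, of "c 0" "c 1" v "c 2" "c 3"] zzw[of "\<zeta> * v"] by (simp add: P_def)
      have "c 0 = 0 \<and> c 1 * v = 0 \<and> c 2 * v^2 = 0 \<and> c 3 * v^3 = 0"
        by (rule vand[OF two znz E0 _ E2]) (use E1 E3 in \<open>simp_all add: algebra_simps\<close>)
      hence "c 0 = 0" "c 1 = 0" "c 2 = 0" "c 3 = 0" using v0 by auto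
      thus "\<forall>i<4. c i = 0" by (auto simp: less_Suc_eq numeral_eq_Suc One_nat_def)
    qed simp
    then obtain c where c: "\<forall>i<4. c i \<in> F" "x = (\<Sum>i<4. c i * [1, v, v^2, v^3] ! i)" by blast
    have cL: "c 0 \<in> ?L" "c 1 \<in> ?L" "c 2 \<in> ?L" "c 3 \<in> ?L" using c(1) FL by auto
    have "x = (c 0 + c 2 * v^2) + (c 1 + c 3 * v^2) * v"
      using c(2) by (simp add: sum4 numeral_eq_Suc algebra_simps power_Suc One_nat_def)
    moreover have "c 0 + c 2 * v^2 \<in> ?L" "c 1 + c 3 * v^2 \<in> ?L"
      using cL uL L by (auto simp: subfield_set_def)
    ultimately show ?thesis by blast
  qed
  have kt: "kt ?L v" by (rule kt.intro[OF L vL]) (use span in blast)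
  have vv: "v * v \<in> ?L" using uL by (simp add: power2_eq_square)
  show ?thesis
    using main_iso[OF F kt FL vv, of ?tw] twK' by (simp add: power2_eq_square)
qed

theorem proposition4p3:
  shows "(\<forall>(F :: 'a::field set) \<rho> \<zeta> v (xa::nat) xb xc.
           cyclic_galois F 4 \<rho> \<and> \<zeta> \<in> F \<and> \<zeta> ^ 4 = 1 \<and> \<zeta> ^ 2 \<noteq> 1 \<and>
           v \<noteq> 0 \<and> \<rho> v = \<zeta> * v \<and> xa < 2 \<and> xb < 2 \<and> xc < 2 \<and> even (xa + xb + xc) \<longrightarrow>
           (let u = v ^ 2; L = adjoin F u;
                Fld' = (\<lambda>i. if i = 1 then UNIV else L);
                tw = (\<lambda>a. case a of Alpha \<Rightarrow> \<rho> ^^ xa | Beta \<Rightarrow> \<rho> ^^ xb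
                                   | Gamma \<Rightarrow> \<rho> ^^ xc | S1 \<Rightarrow> id)
            in F_alg_iso F
                 (species_quot F {1,2,3} Fld' {Alpha, Beta, Gamma} qhd qtl tw zero_rels)
                 (species_quot F {1,2,3} (\<lambda>_. L) {Alpha, Beta, Gamma, S1} qhd qtl tw
                    (zero_rels \<union> {loop_rel u}))
                 (species_scal F {1,2,3} Fld' {Alpha, Beta, Gamma} qhd qtl tw zero_rels)
                 (species_scal F {1,2,3} (\<lambda>_. L) {Alpha, Beta, Gamma, S1} qhd qtl tw
                    (zero_rels \<union> {loop_rel u}))))
       \<and>
       (\<forall>(F :: 'b::field set) \<theta> u.
           subfield_set F \<and> ext_degree_is F 2 \<and> (2::'b) \<noteq> 0 \<and>
           \<theta> \<in> Gal F \<and> \<theta> \<noteq> id \<and> u \<noteq> 0 \<and> \<theta> u = - u \<longrightarrow>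
           (let Fld' = (\<lambda>i. if i = 1 then UNIV else F); tw = (\<lambda>_. id)
            in F_alg_iso F
                 (species_quot F {1,2,3} Fld' {Alpha, Beta, Gamma} qhd qtl tw zero_rels)
                 (species_quot F {1,2,3} (\<lambda>_. F) {Alpha, Beta, Gamma, S1} qhd qtl tw
                    (zero_rels \<union> {loop_rel (u ^ 2)}))
                 (species_scal F {1,2,3} Fld' {Alpha, Beta, Gamma} qhd qtl tw zero_rels)
                 (species_scal F {1,2,3} (\<lambda>_. F) {Alpha, Beta, Gamma, S1} qhd qtl tw
                    (zero_rels \<union> {loop_rel (u ^ 2)}))))"
proof (intro conjI allI impI)
  fix F :: "'a::field set" and \<rho> \<zeta> v and xa xb xc :: nat
  assume h: "cyclic_galois F 4 \<rho> \<and> \<zeta> \<in> F \<and> \<zeta> ^ 4 = 1 \<and> \<zeta> ^ 2 \<noteq> 1 \<and>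
           v \<noteq> 0 \<and> \<rho> v = \<zeta> * v \<and> xa < 2 \<and> xb < 2 \<and> xc < 2 \<and> even (xa + xb + xc)"
  show "let u = v ^ 2; L = adjoin F u;
                Fld' = (\<lambda>i. if i = 1 then UNIV else L);
                tw = (\<lambda>a. case a of Alpha \<Rightarrow> \<rho> ^^ xa | Beta \<Rightarrow> \<rho> ^^ xb
                                   | Gamma \<Rightarrow> \<rho> ^^ xc | S1 \<Rightarrow> id)
            in F_alg_iso F
                 (species_quot F {1,2,3} Fld' {Alpha, Beta, Gamma} qhd qtl tw zero_rels)
                 (species_quot F {1,2,3} (\<lambda>_. L) {Alpha, Beta, Gamma, S1} qhd qtl tw
                    (zero_rels \<union> {loop_rel u}))
                 (species_scal F {1,2,3} Fld' {Alpha, Beta, Gamma} qhd qtl tw zero_rels)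
                 (species_scal F {1,2,3} (\<lambda>_. L) {Alpha, Beta, Gamma, S1} qhd qtl tw
                    (zero_rels \<union> {loop_rel u}))"
    unfolding Let_def using partA[of F \<rho> \<zeta> v xa xb xc] h by blast
next
  fix F :: "'b::field set" and \<theta> u
  assume h: "subfield_set F \<and> ext_degree_is F 2 \<and> (2::'b) \<noteq> 0 \<and>
           \<theta> \<in> Gal F \<and> \<theta> \<noteq> id \<and> u \<noteq> 0 \<and> \<theta> u = - u"
  show "let Fld' = (\<lambda>i. if i = 1 then UNIV else F); tw = (\<lambda>_. id)
            in F_alg_iso F
                 (species_quot F {1,2,3} Fld' {Alpha, Beta, Gamma} qhd qtl tw zero_rels)
                 (species_quot F {1,2,3} (\<lambda>_. F) {Alpha, Beta, Gamma, S1} qhd qtl tw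
                    (zero_rels \<union> {loop_rel (u ^ 2)}))
                 (species_scal F {1,2,3} Fld' {Alpha, Beta, Gamma} qhd qtl tw zero_rels)
                 (species_scal F {1,2,3} (\<lambda>_. F) {Alpha, Beta, Gamma, S1} qhd qtl tw
                    (zero_rels \<union> {loop_rel (u ^ 2)}))"
    unfolding Let_def using partB[of F \<theta> u] h by blast
qed

end
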